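(* Let $m\ge2$ and let $\mathcal{M}\subset\mathbb{R}^{m+1}$ be a smooth embedded hypersurface, $x\in\mathcal{M}$, and let $\mathbf{n}$ be a smooth unit normal vector field on a neighborhood of $x$ in $\mathcal{M}$. For $y\in\mathcal{M}$ near $x$, $y\neq x$, set $$\Omega_y(x)=\frac{2\sin\big(\theta(x,y)/2\big)}{\|x-y\|},\qquad \theta(x,y)=\arccos\big(\mathbf{n}(x)\cdot\mathbf{n}(y)\big).$$ For small $\epsilon>0$ let $A_\epsilon=\{y\in\mathcal{M}:\|x-y\|=\epsilon\}$ (intersected with this neighborhood), equipped with its induced $(m-1)$-dimensional volume measure $\lambda$ and total volume $|A_\epsilon|$. Then $$\psi(\mathcal{L}_x)=\lim_{\epsilon\to0}\frac{1}{|A_\epsilon|}\int_{A_\epsilon}\Omega_y(x)\,d\lambda(y),$$ i.e. the absolute variation curvature at $x$ equals $\psi(\mathcal{L}_x)$.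
   Context: The shape operator $\mathcal{L}_x:T_x\mathcal{M}\to T_x\mathcal{M}$ is $\mathcal{L}_xY=-D_Y\mathbf{n}$ (the negative directional derivative of the unit normal field in direction $Y$). For a linear map $T$ on an $m$-dimensional inner product space $V$, $\psi(T)=\frac{1}{\operatorname{vol}(S^{m-1})}\int_{S^{m-1}}\|Tv\|\,dv$ is the mean of $\|Tv\|$ over the unit sphere $S^{m-1}$ of $V$ with respect to its uniform surface measure; here $V=T_x\mathcal{M}$. *)

theory Defs
  imports "HOL-Analysis.Analysis"
begin

fun iter_dd :: "'a::real_normed_vector list \<Rightarrow> ('a \<Rightarrow> 'b::real_normed_vector) \<Rightarrow> 'a \<Rightarrow> 'b" where
  "iter_dd [] f = f"
| "iter_dd (v # vs) f = (\<lambda>y. frechet_derivative (iter_dd vs f) (at y) v)"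

definition smooth_on :: "'a::real_normed_vector set \<Rightarrow> ('a \<Rightarrow> 'b::real_normed_vector) \<Rightarrow> bool" where
  "smooth_on U f \<longleftrightarrow> open U \<and> (\<forall>vs. iter_dd vs f differentiable_on U)"

definition smooth_on_subset :: "'a::real_normed_vector set \<Rightarrow> ('a \<Rightarrow> 'b::real_normed_vector) \<Rightarrow> bool" where
  "smooth_on_subset S f \<longleftrightarrow>
     (\<forall>p\<in>S. \<exists>U F. p \<in> U \<and> smooth_on U F \<and> (\<forall>y\<in>S \<inter> U. F y = f y))"

definition smooth_hypersurface :: "'a::euclidean_space set \<Rightarrow> bool" where
  "smooth_hypersurface M \<longleftrightarrow>
     (\<forall>p\<in>M. \<exists>U f. p \<in> U \<and> smooth_on U (f :: 'a \<Rightarrow> real) \<and>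
        (\<forall>y\<in>U. frechet_derivative f (at y) \<noteq> (\<lambda>v. 0)) \<and>
        M \<inter> U = {y \<in> U. f y = 0})"

definition tangent_space :: "'a::euclidean_space set \<Rightarrow> 'a \<Rightarrow> 'a set" where
  "tangent_space M p = {v. \<exists>\<gamma> e. e > 0 \<and> (\<forall>t\<in>{-e<..<e}. \<gamma> t \<in> M) \<and> \<gamma> 0 = p \<and>
                              (\<gamma> has_vector_derivative v) (at 0)}"

definition shape_operator :: "'a::euclidean_space set \<Rightarrow> ('a \<Rightarrow> 'a) \<Rightarrow> 'a \<Rightarrow> 'a \<Rightarrow> 'a" where
  "shape_operator M n x = (\<lambda>Y. - frechet_derivative n (at x within M) Y)"

definition hausdorff_pre :: "real \<Rightarrow> real \<Rightarrow> 'a::metric_space set \<Rightarrow> ennreal" where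
  "hausdorff_pre s \<delta> A =
     (INF C \<in> {C :: nat \<Rightarrow> 'a set. A \<subseteq> (\<Union>i. C i) \<and> (\<forall>i. bounded (C i) \<and> diameter (C i) \<le> \<delta>)}.
        (\<Sum>i. ennreal (diameter (C i) powr s)))"

definition hausdorff_outer :: "real \<Rightarrow> 'a::metric_space set \<Rightarrow> ennreal" where
  "hausdorff_outer s A = (SUP \<delta> \<in> {0<..}. hausdorff_pre s \<delta> A)"

definition hausdorff_measure :: "real \<Rightarrow> 'a::metric_space measure" where
  "hausdorff_measure s = measure_of UNIV (sets borel) (hausdorff_outer s)"

text \<open>Mean of norm (T v) over the unit sphere of the subspace V (dimension m),
  w.r.t. the (m-1)-dimensional surface measure (normalization cancels).\<close>
definition psi :: "nat \<Rightarrow> 'a::euclidean_space set \<Rightarrow> ('a \<Rightarrow> 'a) \<Rightarrow> real" where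
  "psi m V T = (let S = {v \<in> V. norm v = 1}; H = hausdorff_measure (real m - 1) in
     (LINT v:S|H. norm (T v)) / measure H S)"

definition Omega :: "('a::euclidean_space \<Rightarrow> 'a) \<Rightarrow> 'a \<Rightarrow> 'a \<Rightarrow> real" where
  "Omega n x y = 2 * sin (arccos (n x \<bullet> n y) / 2) / norm (x - y)"

end

theory Submission
  imports Defs
begin


lemma diam_image_le:
  fixes f :: "'a::euclidean_space \<Rightarrow> 'b::euclidean_space"
  assumes c: "c > 0" and bC: "bounded C"
    and L: "\<And>a b. a \<in> E \<Longrightarrow> b \<in> E \<Longrightarrow> dist (f a) (f b) \<le> c * dist a b"
  shows "bounded (f ` (C \<inter> E)) \<and> diameter (f ` (C \<inter> E)) \<le> c * diameter C"
proof -
  have *: "dist p q \<le> c * diameter C" if pq: "p \<in> f ` (C \<inter> E)" "q \<in> f ` (C \<inter> E)" for p q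
  proof -
    obtain a b where ab: "a \<in> C \<inter> E" "b \<in> C \<inter> E" "p = f a" "q = f b" using pq by blast
    have "dist p q \<le> c * dist a b" using L ab by auto
    also have "\<dots> \<le> c * diameter C" using diameter_bounded_bound[OF bC, of a b] ab c by auto
    finally show ?thesis .
  qed
  have "0 \<le> diameter C" using diameter_ge_0[OF bC] .
  then show ?thesis
    using * c unfolding bounded_two_points
    by (auto intro!: diameter_le simp: dist_norm)
qed

lemma hausdorff_pre_lipschitz:
  fixes f :: "'a::euclidean_space \<Rightarrow> 'b::euclidean_space"
  assumes c: "c > 0" and s: "s \<ge> 0"
    and L: "\<And>a b. a \<in> E \<Longrightarrow> b \<in> E \<Longrightarrow> dist (f a) (f b) \<le> c * dist a b"
  shows "hausdorff_pre s (c*\<delta>) (f ` E) \<le> ennreal (c powr s) * hausdorff_pre s \<delta> E"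
proof -
  define k where "k = ennreal (c powr s)"
  define k' where "k' = ennreal (1 / c powr s)"
  have kk: "k * k' = 1" unfolding k_def k'_def using c
    by (simp add: ennreal_mult''[symmetric] ) 
  have key: "hausdorff_pre s (c*\<delta>) (f ` E) \<le> k * (\<Sum>i. ennreal (diameter (C i) powr s))"
    if C: "E \<subseteq> (\<Union>i. C i)" "\<forall>i. bounded (C i) \<and> diameter (C i) \<le> \<delta>" for C
  proof -
    define C' where "C' i = f ` (C i \<inter> E)" for i
    have D: "bounded (C' i) \<and> diameter (C' i) \<le> c * diameter (C i)" for i
      unfolding C'_def using diam_image_le[OF c _ L] C by blast
    have "C' \<in> {C :: nat \<Rightarrow> 'b set. f ` E \<subseteq> (\<Union>i. C i) \<and> (\<forall>i. bounded (C i) \<and> diameter (C i) \<le> c*\<delta>)}"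
    proof safe
      fix a assume "a \<in> E" then show "f a \<in> (\<Union>i. C' i)" using C unfolding C'_def by blast
    next
      fix i show "bounded (C' i)" using D by blast
      show "diameter (C' i) \<le> c*\<delta>" using D[of i] C c
        by (meson mult_left_mono order.trans less_imp_le)
    qed
    then have "hausdorff_pre s (c*\<delta>) (f ` E) \<le> (\<Sum>i. ennreal (diameter (C' i) powr s))"
      unfolding hausdorff_pre_def by (rule INF_lower)
    also have "\<dots> \<le> (\<Sum>i. k * ennreal (diameter (C i) powr s))"
    proof (intro suminf_le allI)
      fix i
      have d0: "0 \<le> diameter (C' i)" using D diameter_ge_0 by blast
      have d1: "0 \<le> diameter (C i)" using C diameter_ge_0 by blast
      have "diameter (C' i) powr s \<le> (c * diameter (C i)) powr s"
        using D d0 s by (intro powr_mono2) auto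
      also have "\<dots> = c powr s * diameter (C i) powr s" using c d1 by (simp add: powr_mult)
      finally show "ennreal (diameter (C' i) powr s) \<le> k * ennreal (diameter (C i) powr s)"
        unfolding k_def by (simp add: ennreal_mult''[symmetric] ennreal_leI)
    qed auto
    also have "\<dots> = k * (\<Sum>i. ennreal (diameter (C i) powr s))" by (rule ennreal_suminf_cmult)
    finally show ?thesis .
  qed
  have "k' * hausdorff_pre s (c*\<delta>) (f ` E) \<le> hausdorff_pre s \<delta> E"
    unfolding hausdorff_pre_def[of s \<delta>]
  proof (rule INF_greatest)
    fix C :: "nat \<Rightarrow> 'a set" assume "C \<in> {C. E \<subseteq> (\<Union>i. C i) \<and> (\<forall>i. bounded (C i) \<and> diameter (C i) \<le> \<delta>)}"
    then have "hausdorff_pre s (c*\<delta>) (f ` E) \<le> k * (\<Sum>i. ennreal (diameter (C i) powr s))"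
      using key by blast
    then have "k' * hausdorff_pre s (c*\<delta>) (f ` E) \<le> k' * (k * (\<Sum>i. ennreal (diameter (C i) powr s)))"
      by (rule mult_left_mono) simp
    also have "\<dots> = (\<Sum>i. ennreal (diameter (C i) powr s))" using kk
      by (simp add: mult.assoc[symmetric] mult.commute)
    finally show "k' * hausdorff_pre s (c*\<delta>) (f ` E) \<le> (\<Sum>i. ennreal (diameter (C i) powr s))" .
  qed
  then have "k * (k' * hausdorff_pre s (c*\<delta>) (f ` E)) \<le> k * hausdorff_pre s \<delta> E"
    by (rule mult_left_mono) simp
  then show ?thesis using kk unfolding k_def[symmetric]
    by (simp add: mult.assoc[symmetric])
qed

lemma hausdorff_outer_lipschitz:
  fixes f :: "'a::euclidean_space \<Rightarrow> 'b::euclidean_space"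
  assumes c: "c > 0" and s: "s \<ge> 0"
    and L: "\<And>a b. a \<in> E \<Longrightarrow> b \<in> E \<Longrightarrow> dist (f a) (f b) \<le> c * dist a b"
  shows "hausdorff_outer s (f ` E) \<le> ennreal (c powr s) * hausdorff_outer s E"
  unfolding hausdorff_outer_def[of s "f ` E"]
proof (rule SUP_least)
  fix d :: real assume d: "d \<in> {0<..}"
  have "hausdorff_pre s d (f ` E) = hausdorff_pre s (c * (d/c)) (f ` E)" using c by simp
  also have "\<dots> \<le> ennreal (c powr s) * hausdorff_pre s (d/c) E"
    by (rule hausdorff_pre_lipschitz[OF c s L])
  also have "\<dots> \<le> ennreal (c powr s) * hausdorff_outer s E"
    unfolding hausdorff_outer_def using d c
    by (intro mult_left_mono SUP_upper) auto
  finally show "hausdorff_pre s d (f ` E) \<le> ennreal (c powr s) * hausdorff_outer s E" .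
qed


lemma ratio_real_bound:
  fixes iA jA iS mA mS a b K \<eta> :: real
  assumes mA: "mA > 0" and mS: "mS > 0" and iS: "iS \<ge> 0" and ab: "a > 0" "b > 0"
    and h1: "jA \<le> a * iS" and h2: "iS \<le> b * jA" and h3: "mA \<le> a * mS" and h4: "mS \<le> b * mA"
    and h5: "\<bar>iA - jA\<bar> \<le> \<eta> * mA" and h6: "iS \<le> K * mS"
  shows "\<bar>iA/mA - iS/mS\<bar> \<le> \<eta> + (a*b - 1) * K"
proof -
  define q where "q = a*b"
  define \<psi> where "\<psi> = iS/mS"
  have q1: "q \<ge> 1"
  proof -
    have "mA \<le> a * (b * mA)" using h3 h4 ab by (meson mult_left_mono less_imp_le order.trans)
    then have "1 * mA \<le> q * mA" unfolding q_def by (simp add: mult.assoc)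
    then show ?thesis using mA by simp
  qed
  have psi0: "0 \<le> \<psi>" "\<psi> \<le> K" unfolding \<psi>_def using iS mS h6 by (auto simp: field_simps)
  have up: "jA/mA \<le> q * \<psi>"
  proof -
    have "jA * mS \<le> (a*iS) * (b*mA)"
      using h1 h4 mS by (meson mult_mono order.trans iS ab less_imp_le mult_nonneg_nonneg h2 mult_right_mono mult_left_mono)
    then show ?thesis unfolding q_def \<psi>_def using mA mS by (simp add: field_simps)
  qed
  have lo: "\<psi> \<le> q * (jA/mA)"
  proof -
    have j0: "0 \<le> jA" using h2 iS ab by (smt (verit) mult_pos_neg)
    have "iS * mA \<le> (b*jA) * (a*mS)"
      using h2 h3 by (meson mult_mono j0 ab less_imp_le mult_nonneg_nonneg mA iS)
    then show ?thesis unfolding q_def \<psi>_def using mA mS by (simp add: field_simps)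
  qed
  have "\<psi> - jA/mA \<le> (q - 1) * \<psi>"
  proof -
    have "\<psi> - jA/mA \<le> \<psi> - \<psi>/q" using lo q1 by (simp add: field_simps)
    also have "\<dots> = ((q-1)/q) * \<psi>" using q1 by (simp add: field_simps)
    also have "\<dots> \<le> (q-1) * \<psi>"
    proof (rule mult_right_mono)
      have sq: "0 \<le> (q-1)*(q-1)" by simp
      have "(q-1)*1 \<le> (q-1) * q" using q1 by (intro mult_left_mono) auto
      moreover have "0 < q" using q1 by linarith
      ultimately show "(q-1)/q \<le> q - 1" by (metis pos_divide_le_eq mult.commute mult.right_neutral)
    qed (use psi0 in auto)
    finally show ?thesis .
  qed
  moreover have "jA/mA - \<psi> \<le> (q - 1) * \<psi>" using up by (simp add: algebra_simps)
  ultimately have "\<bar>jA/mA - \<psi>\<bar> \<le> (q - 1) * K"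
    using psi0 q1 by (smt (verit) mult_left_mono)
  moreover have "\<bar>iA/mA - jA/mA\<bar> \<le> \<eta>"
  proof -
    have "\<bar>iA/mA - jA/mA\<bar> = \<bar>iA - jA\<bar> / mA" using mA
      by (metis abs_div_pos diff_divide_distrib)
    also have "\<dots> \<le> (\<eta> * mA) / mA" using h5 mA by (intro divide_right_mono) auto
    also have "\<dots> = \<eta>" using mA by simp
    finally show ?thesis .
  qed
  ultimately show ?thesis unfolding \<psi>_def q_def by linarith
qed



lemma lin_expand:
  fixes L :: "'a::euclidean_space \<Rightarrow> real"
  assumes "linear L"
  shows "L v = (\<Sum>b\<in>Basis. (v \<bullet> b) * L b)"
proof -
  have "L v = L (\<Sum>b\<in>Basis. (v \<bullet> b) *\<^sub>R b)" by (simp add: euclidean_representation)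
  also have "\<dots> = (\<Sum>b\<in>Basis. (v \<bullet> b) * L b)"
    using assms by (simp add: linear_sum linear_scale)
  finally show ?thesis .
qed

lemma lin_repr:
  fixes L :: "'a::euclidean_space \<Rightarrow> real"
  assumes "linear L"
  shows "L v = (\<Sum>b\<in>Basis. L b *\<^sub>R b) \<bullet> v"
  using lin_expand[OF assms, of v] by (simp add: inner_sum_left inner_commute[of v] mult.commute)

lemma lin_bound:
  fixes L :: "'a::euclidean_space \<Rightarrow> real"
  assumes "linear L"
  shows "\<bar>L v\<bar> \<le> norm v * (\<Sum>b\<in>Basis. \<bar>L b\<bar>)"
proof -
  have "\<bar>L v\<bar> \<le> (\<Sum>b\<in>Basis. \<bar>(v \<bullet> b) * L b\<bar>)"
    unfolding lin_expand[OF assms, of v] by (rule sum_abs)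
  also have "\<dots> \<le> (\<Sum>b\<in>Basis. norm v * \<bar>L b\<bar>)"
    by (intro sum_mono) (auto simp: abs_mult Basis_le_norm mult_right_mono)
  finally show ?thesis by (simp add: sum_distrib_left)
qed

lemma onorm_lin_bound:
  fixes L :: "'a::euclidean_space \<Rightarrow> real"
  assumes "linear L"
  shows "onorm L \<le> (\<Sum>b\<in>Basis. \<bar>L b\<bar>)"
  by (rule onorm_le) (use lin_bound[OF assms] in \<open>simp add: mult.commute\<close>)



lemma proj_basic:
  fixes \<nu> d :: "'a::euclidean_space"
  assumes nu1: "norm \<nu> = 1"
  shows "\<nu> \<bullet> (d - (\<nu> \<bullet> d) *\<^sub>R \<nu>) = 0"
    and "norm d ^ 2 = norm (d - (\<nu> \<bullet> d) *\<^sub>R \<nu>) ^ 2 + (\<nu> \<bullet> d) ^ 2"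
    and "norm (d - (\<nu> \<bullet> d) *\<^sub>R \<nu>) \<le> norm d"
    and "norm d \<le> norm (d - (\<nu> \<bullet> d) *\<^sub>R \<nu>) + \<bar>\<nu> \<bullet> d\<bar>"
proof -
  have nn: "\<nu> \<bullet> \<nu> = 1" using nu1 by (simp add: dot_square_norm)
  show o: "\<nu> \<bullet> (d - (\<nu> \<bullet> d) *\<^sub>R \<nu>) = 0" using nn by (simp add: inner_diff_right)
  have dd: "d = (d - (\<nu> \<bullet> d) *\<^sub>R \<nu>) + (\<nu> \<bullet> d) *\<^sub>R \<nu>" by simp
  have o2: "(d - (\<nu> \<bullet> d) *\<^sub>R \<nu>) \<bullet> ((\<nu> \<bullet> d) *\<^sub>R \<nu>) = 0" using o by (simp add: inner_commute)
  have "norm d ^ 2 = norm (d - (\<nu> \<bullet> d) *\<^sub>R \<nu>) ^ 2 + norm ((\<nu> \<bullet> d) *\<^sub>R \<nu>) ^ 2"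
    using norm_add_Pythagorean[of "d - (\<nu> \<bullet> d) *\<^sub>R \<nu>" "(\<nu> \<bullet> d) *\<^sub>R \<nu>"] o2 dd
    unfolding orthogonal_def by simp
  then show pyth: "norm d ^ 2 = norm (d - (\<nu> \<bullet> d) *\<^sub>R \<nu>) ^ 2 + (\<nu> \<bullet> d) ^ 2"
    using nu1 by (simp add: power_mult_distrib)
  then have "norm (d - (\<nu> \<bullet> d) *\<^sub>R \<nu>) ^ 2 \<le> norm d ^ 2" by simp
  then show "norm (d - (\<nu> \<bullet> d) *\<^sub>R \<nu>) \<le> norm d" by (simp add: power2_le_iff_abs_le)
  have "norm d \<le> norm (d - (\<nu> \<bullet> d) *\<^sub>R \<nu>) + norm ((\<nu> \<bullet> d) *\<^sub>R \<nu>)"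
    using norm_triangle_ineq[of "d - (\<nu> \<bullet> d) *\<^sub>R \<nu>" "(\<nu> \<bullet> d) *\<^sub>R \<nu>"] by simp
  then show "norm d \<le> norm (d - (\<nu> \<bullet> d) *\<^sub>R \<nu>) + \<bar>\<nu> \<bullet> d\<bar>" using nu1 by simp
qed

lemma single_point:
  fixes \<nu> d :: "'a::euclidean_space"
  assumes nu1: "norm \<nu> = 1" and e: "\<epsilon> > 0" and eta: "0 \<le> \<eta>"
    and n: "norm d = \<epsilon>" and t: "\<bar>\<nu> \<bullet> d\<bar> \<le> \<eta> * norm (d - (\<nu> \<bullet> d) *\<^sub>R \<nu>)"
  shows "\<epsilon> / (1 + \<eta>) \<le> norm (d - (\<nu> \<bullet> d) *\<^sub>R \<nu>)" and "norm (d - (\<nu> \<bullet> d) *\<^sub>R \<nu>) \<le> \<epsilon>"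
    and "d - (\<nu> \<bullet> d) *\<^sub>R \<nu> \<noteq> 0"
    and "norm (d /\<^sub>R \<epsilon> - (d - (\<nu> \<bullet> d) *\<^sub>R \<nu>) /\<^sub>R norm (d - (\<nu> \<bullet> d) *\<^sub>R \<nu>)) \<le> 2 * \<eta>"
proof -
  define w where "w = d - (\<nu> \<bullet> d) *\<^sub>R \<nu>"
  define tt where "tt = \<nu> \<bullet> d"
  have b: "norm w \<le> norm d" "norm d \<le> norm w + \<bar>tt\<bar>"
    using proj_basic[OF nu1, of d] unfolding w_def tt_def by auto
  have tw: "\<bar>tt\<bar> \<le> \<eta> * norm w" using t unfolding w_def tt_def .
  have "\<epsilon> \<le> (1 + \<eta>) * norm w" using b tw n by (simp add: algebra_simps)
  then show lw: "\<epsilon> / (1 + \<eta>) \<le> norm (d - (\<nu> \<bullet> d) *\<^sub>R \<nu>)" using eta unfolding w_def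
    by (simp add: divide_le_eq mult.commute)
  show uw: "norm (d - (\<nu> \<bullet> d) *\<^sub>R \<nu>) \<le> \<epsilon>" using b n unfolding w_def by simp
  have wpos: "norm w > 0" using lw e eta unfolding w_def[symmetric]
    by (smt (verit) divide_pos_pos)
  then show "d - (\<nu> \<bullet> d) *\<^sub>R \<nu> \<noteq> 0" unfolding w_def by auto
  have dw: "d = w + tt *\<^sub>R \<nu>" unfolding w_def tt_def by simp
  have "d /\<^sub>R \<epsilon> - w /\<^sub>R norm w = (inverse \<epsilon> - inverse (norm w)) *\<^sub>R w + (tt * inverse \<epsilon>) *\<^sub>R \<nu>"
    unfolding dw by (simp add: algebra_simps scaleR_diff_left)
  then have "norm (d /\<^sub>R \<epsilon> - w /\<^sub>R norm w) \<le> \<bar>1/\<epsilon> - 1/norm w\<bar> * norm w + \<bar>tt\<bar>/\<epsilon>"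
    using norm_triangle_ineq[of "(inverse \<epsilon> - inverse (norm w)) *\<^sub>R w" "(tt * inverse \<epsilon>) *\<^sub>R \<nu>"] nu1 e
    by (simp add: divide_inverse abs_mult)
  also have "\<bar>1/\<epsilon> - 1/norm w\<bar> * norm w = 1 - norm w / \<epsilon>"
  proof -
    have "1/\<epsilon> \<le> 1/norm w" using uw wpos unfolding w_def[symmetric] by (simp add: frac_le)
    then have "\<bar>1/\<epsilon> - 1/norm w\<bar> = 1/norm w - 1/\<epsilon>" by simp
    then show ?thesis using wpos e by (simp add: field_simps)
  qed
  also have "\<bar>tt\<bar>/\<epsilon> \<le> \<eta>"
  proof -
    have "\<bar>tt\<bar> \<le> \<eta> * \<epsilon>" using tw uw eta unfolding w_def[symmetric]
      by (meson mult_left_mono order.trans)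
    then show ?thesis using e by (simp add: divide_le_eq)
  qed
  also have "1 - norm w / \<epsilon> \<le> \<eta>"
  proof -
    have "\<epsilon> \<le> (1 + \<eta>) * norm w" using b tw n by (simp add: algebra_simps)
    then have "\<epsilon> - norm w \<le> \<eta> * norm w" by (simp add: algebra_simps)
    also have "\<dots> \<le> \<eta> * \<epsilon>" using uw eta unfolding w_def[symmetric] by (intro mult_left_mono) auto
    finally show ?thesis using e by (simp add: field_simps)
  qed
  finally show "norm (d /\<^sub>R \<epsilon> - (d - (\<nu> \<bullet> d) *\<^sub>R \<nu>) /\<^sub>R norm (d - (\<nu> \<bullet> d) *\<^sub>R \<nu>)) \<le> 2 * \<eta>"
    unfolding w_def by simp
qed


lemma pair_points:
  fixes \<nu> d1 d2 :: "'a::euclidean_space"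
  assumes nu1: "norm \<nu> = 1" and e: "\<epsilon> > 0" and eta: "0 \<le> \<eta>" "\<eta> \<le> 1"
    and n1: "norm d1 = \<epsilon>" and n2: "norm d2 = \<epsilon>"
    and t1: "\<bar>\<nu> \<bullet> d1\<bar> \<le> \<eta> * norm (d1 - (\<nu> \<bullet> d1) *\<^sub>R \<nu>)"
    and t2: "\<bar>\<nu> \<bullet> d2\<bar> \<le> \<eta> * norm (d2 - (\<nu> \<bullet> d2) *\<^sub>R \<nu>)"
    and t12: "\<bar>\<nu> \<bullet> (d1 - d2)\<bar> \<le> \<eta> * norm ((d1 - d2) - (\<nu> \<bullet> (d1 - d2)) *\<^sub>R \<nu>)"
  shows "(1-\<eta>)/\<epsilon> * norm (d1-d2) \<le> norm ((d1 - (\<nu> \<bullet> d1) *\<^sub>R \<nu>) /\<^sub>R norm (d1 - (\<nu> \<bullet> d1) *\<^sub>R \<nu>)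
            - (d2 - (\<nu> \<bullet> d2) *\<^sub>R \<nu>) /\<^sub>R norm (d2 - (\<nu> \<bullet> d2) *\<^sub>R \<nu>))"
    and "norm ((d1 - (\<nu> \<bullet> d1) *\<^sub>R \<nu>) /\<^sub>R norm (d1 - (\<nu> \<bullet> d1) *\<^sub>R \<nu>)
            - (d2 - (\<nu> \<bullet> d2) *\<^sub>R \<nu>) /\<^sub>R norm (d2 - (\<nu> \<bullet> d2) *\<^sub>R \<nu>)) \<le> (1+\<eta>)^2/\<epsilon> * norm (d1-d2)"
proof -
  define w1 where "w1 = d1 - (\<nu> \<bullet> d1) *\<^sub>R \<nu>"
  define w2 where "w2 = d2 - (\<nu> \<bullet> d2) *\<^sub>R \<nu>"
  define s1 where "s1 = \<nu> \<bullet> d1"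
  define s2 where "s2 = \<nu> \<bullet> d2"
  define W where "W = w1 - w2"
  define D where "D = d1 - d2"
  define a1 where "a1 = norm w1"
  define a2 where "a2 = norm w2"
  define u1 where "u1 = w1 /\<^sub>R a1"
  define u2 where "u2 = w2 /\<^sub>R a2"
  have WD: "W = D - (\<nu> \<bullet> D) *\<^sub>R \<nu>" "\<nu> \<bullet> D = s1 - s2"
    unfolding W_def D_def w1_def w2_def s1_def s2_def by (auto simp: algebra_simps inner_diff_right)
  note sp1 = single_point[OF nu1 e eta(1) n1 t1]
  note sp2 = single_point[OF nu1 e eta(1) n2 t2]
  have a1b: "\<epsilon> / (1+\<eta>) \<le> a1" "a1 \<le> \<epsilon>" "a1 > 0"
    using sp1 unfolding a1_def w1_def by auto
  have a2b: "\<epsilon> / (1+\<eta>) \<le> a2" "a2 \<le> \<epsilon>" "a2 > 0"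
    using sp2 unfolding a2_def w2_def by auto
  have py1: "\<epsilon>^2 = a1^2 + s1^2" using proj_basic(2)[OF nu1, of d1] n1 unfolding a1_def w1_def s1_def by simp
  have py2: "\<epsilon>^2 = a2^2 + s2^2" using proj_basic(2)[OF nu1, of d2] n2 unfolding a2_def w2_def s2_def by simp
  have s1b: "\<bar>s1\<bar> \<le> \<eta> * a1" using t1 unfolding s1_def a1_def w1_def .
  have s2b: "\<bar>s2\<bar> \<le> \<eta> * a2" using t2 unfolding s2_def a2_def w2_def .
  have s12: "\<bar>s1 - s2\<bar> \<le> \<eta> * norm W" using t12 WD unfolding D_def by simp
  have DW: "norm W \<le> norm D" "norm D \<le> norm W + \<bar>s1 - s2\<bar>"
    using proj_basic(3,4)[OF nu1, of D] WD by auto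
  have DW2: "norm D \<le> (1 + \<eta>) * norm W" using DW s12 by (simp add: algebra_simps)
  have aa: "\<bar>a1 - a2\<bar> \<le> \<eta>^2 * norm W"
  proof -
    have "(a1 - a2) * (a1 + a2) = (s2 - s1) * (s2 + s1)" using py1 py2 by (simp add: algebra_simps power2_eq_square)
    then have "\<bar>a1 - a2\<bar> * (a1 + a2) = \<bar>s1 - s2\<bar> * \<bar>s1 + s2\<bar>" using a1b a2b
      by (metis abs_mult abs_minus_commute abs_of_pos add_pos_pos add.commute)
    also have "\<dots> \<le> (\<eta> * norm W) * (\<eta> * (a1 + a2))"
    proof (rule mult_mono)
      show "\<bar>s1 + s2\<bar> \<le> \<eta> * (a1 + a2)" using s1b s2b by (simp add: algebra_simps)
    qed (use s12 eta in auto)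
    finally have "\<bar>a1 - a2\<bar> * (a1 + a2) \<le> (\<eta>^2 * norm W) * (a1 + a2)" by (simp add: power2_eq_square algebra_simps)
    then show ?thesis using a1b a2b by (simp add: mult_le_cancel_right)
  qed
  have nu2: "norm u2 = 1" unfolding u2_def using a2b unfolding a2_def by simp
  have vec: "a1 *\<^sub>R (u1 - u2) = W - (a1 - a2) *\<^sub>R u2"
  proof -
    have "a1 *\<^sub>R u1 = w1" unfolding u1_def using a1b by simp
    moreover have "a2 *\<^sub>R u2 = w2" unfolding u2_def using a2b by simp
    ultimately show ?thesis unfolding W_def by (simp add: algebra_simps)
  qed
  have nv: "a1 * norm (u1 - u2) = norm (W - (a1 - a2) *\<^sub>R u2)"
    using arg_cong[OF vec, of norm] a1b by simp
  have up1: "a1 * norm (u1 - u2) \<le> (1 + \<eta>^2) * norm W"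
  proof -
    have "norm (W - (a1 - a2) *\<^sub>R u2) \<le> norm W + \<bar>a1 - a2\<bar>"
      using norm_triangle_ineq4[of W "(a1 - a2) *\<^sub>R u2"] nu2 by simp
    then show ?thesis using nv aa by (simp add: algebra_simps)
  qed
  have lo1: "(1 - \<eta>^2) * norm W \<le> a1 * norm (u1 - u2)"
  proof -
    have "norm W - \<bar>a1 - a2\<bar> \<le> norm (W - (a1 - a2) *\<^sub>R u2)"
      using norm_triangle_ineq2[of W "(a1 - a2) *\<^sub>R u2"] nu2 by simp
    then show ?thesis using nv aa by (simp add: algebra_simps)
  qed
  have eta2: "\<eta>^2 \<le> \<eta>" using eta by (simp add: power2_eq_square mult_left_le)
  have U: "norm (u1 - u2) \<le> (1+\<eta>)^2/\<epsilon> * norm D"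
  proof -
    have "norm (u1 - u2) \<le> (1 + \<eta>^2) * norm W * (1 / a1)"
      using up1 a1b by (simp add: le_divide_eq mult.commute)
    also have "\<dots> \<le> ((1 + \<eta>) * norm D) * ((1 + \<eta>) / \<epsilon>)"
    proof (rule mult_mono)
      show "(1 + \<eta>^2) * norm W \<le> (1 + \<eta>) * norm D"
        using eta2 DW(1) eta by (intro mult_mono) auto
      have "\<epsilon> \<le> (1 + \<eta>) * a1" using a1b(1) eta by (simp add: divide_le_eq mult.commute)
      then show "1 / a1 \<le> (1 + \<eta>) / \<epsilon>" using a1b e by (simp add: field_simps)
    qed (use eta a1b in auto)
    also have "\<dots> = (1+\<eta>)^2/\<epsilon> * norm D" by (simp add: power2_eq_square)
    finally show ?thesis .
  qed
  have L: "(1-\<eta>)/\<epsilon> * norm D \<le> norm (u1 - u2)"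
  proof -
    have "(1-\<eta>) * norm D \<le> (1-\<eta>) * ((1 + \<eta>) * norm W)" using DW2 eta by (intro mult_left_mono) auto
    also have "\<dots> = (1 - \<eta>^2) * norm W" by (simp add: power2_eq_square algebra_simps)
    also have "\<dots> \<le> a1 * norm (u1 - u2)" by (rule lo1)
    also have "\<dots> \<le> \<epsilon> * norm (u1 - u2)" using a1b by (intro mult_right_mono) auto
    finally show ?thesis using e by (simp add: field_simps)
  qed
  show "(1-\<eta>)/\<epsilon> * norm (d1-d2) \<le> norm ((d1 - (\<nu> \<bullet> d1) *\<^sub>R \<nu>) /\<^sub>R norm (d1 - (\<nu> \<bullet> d1) *\<^sub>R \<nu>)
            - (d2 - (\<nu> \<bullet> d2) *\<^sub>R \<nu>) /\<^sub>R norm (d2 - (\<nu> \<bullet> d2) *\<^sub>R \<nu>))"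
    using L unfolding u1_def u2_def a1_def a2_def w1_def w2_def D_def .
  show "norm ((d1 - (\<nu> \<bullet> d1) *\<^sub>R \<nu>) /\<^sub>R norm (d1 - (\<nu> \<bullet> d1) *\<^sub>R \<nu>)
            - (d2 - (\<nu> \<bullet> d2) *\<^sub>R \<nu>) /\<^sub>R norm (d2 - (\<nu> \<bullet> d2) *\<^sub>R \<nu>)) \<le> (1+\<eta>)^2/\<epsilon> * norm (d1-d2)"
    using U unfolding u1_def u2_def a1_def a2_def w1_def w2_def D_def .
qed



lemma omega_identity:
  fixes a b :: "'a::euclidean_space"
  assumes "norm a = 1" "norm b = 1"
  shows "2 * sin (arccos (a \<bullet> b) / 2) = norm (a - b)"
proof -
  define c where "c = a \<bullet> b"
  have c1: "\<bar>c\<bar> \<le> 1" unfolding c_def using Cauchy_Schwarz_ineq2[of a b] assms by simp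
  define \<theta> where "\<theta> = arccos c"
  have th: "0 \<le> \<theta>" "\<theta> \<le> pi" "cos \<theta> = c" unfolding \<theta>_def using c1
    by (auto intro: arccos_lbound arccos_ubound cos_arccos)
  have s0: "0 \<le> sin (\<theta>/2)" using th by (intro sin_ge_zero) auto
  have "cos \<theta> = 1 - 2 * sin (\<theta>/2) ^ 2" using cos_double_sin[of "\<theta>/2"] by simp
  then have sq: "(2 * sin (\<theta>/2))^2 = 2 - 2 * c" using th by (simp add: power2_eq_square algebra_simps)
  have aa: "a \<bullet> a = 1" "b \<bullet> b = 1" using assms by (simp_all add: dot_square_norm)
  have "norm (a - b)^2 = 2 - 2 * c" unfolding c_def using aa
    by (simp add: power2_norm_eq_inner inner_diff_left inner_diff_right inner_commute)
  then have "(2 * sin (\<theta>/2))^2 = norm (a - b)^2" using sq by simp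
  moreover have "0 \<le> 2 * sin (\<theta>/2)" using s0 by simp
  ultimately have "2 * sin (\<theta>/2) = norm (a - b)" using power2_eq_iff_nonneg[of "2 * sin (\<theta>/2)" "norm (a - b)"] by simp
  then show ?thesis unfolding \<theta>_def c_def .
qed

lemma smooth_on_facts:
  fixes f :: "'a::euclidean_space \<Rightarrow> 'b::real_normed_vector"
  assumes "smooth_on U f"
  shows "open U" "\<And>y. y \<in> U \<Longrightarrow> (f has_derivative frechet_derivative f (at y)) (at y)"
    "\<And>v. continuous_on U (\<lambda>y. frechet_derivative f (at y) v)"
proof -
  show o: "open U" using assms unfolding smooth_on_def by simp
  have d0: "f differentiable_on U" using assms unfolding smooth_on_def
    by (metis iter_dd.simps(1))
  show "(f has_derivative frechet_derivative f (at y)) (at y)" if "y \<in> U" for y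
    using d0 o that by (simp add: differentiable_on_eq_differentiable_at frechet_derivative_works[symmetric])
  show "continuous_on U (\<lambda>y. frechet_derivative f (at y) v)" for v
  proof -
    have "iter_dd [v] f differentiable_on U" using assms unfolding smooth_on_def by blast
    then show ?thesis by (simp add: differentiable_imp_continuous_on)
  qed
qed

lemma smooth_subset_facts:
  fixes n :: "'a::euclidean_space \<Rightarrow> 'b::real_normed_vector"
  assumes sm: "smooth_on_subset (M \<inter> V) n" and V: "open V"
  shows "continuous_on (M \<inter> V) n" and "\<And>p. p \<in> M \<inter> V \<Longrightarrow> n differentiable (at p within M)"
proof -
  have loc: "\<exists>F F'. (F has_derivative F') (at p) \<and> (\<exists>d>0. \<forall>y\<in>M. dist y p < d \<longrightarrow> y \<in> V \<and> F y = n y)"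
    if p: "p \<in> M \<inter> V" for p
  proof -
    obtain U F where UF: "p \<in> U" "smooth_on U F" "\<forall>y\<in>M \<inter> V \<inter> U. F y = n y"
      using sm p unfolding smooth_on_subset_def by blast
    have oU: "open U" using smooth_on_facts(1)[OF UF(2)] .
    have der: "(F has_derivative frechet_derivative F (at p)) (at p)"
      using smooth_on_facts(2)[OF UF(2) UF(1)] .
    have "open (U \<inter> V)" "p \<in> U \<inter> V" using oU V UF(1) p by auto
    then obtain d where d: "d > 0" "ball p d \<subseteq> U \<inter> V" unfolding open_contains_ball by blast
    have "\<forall>y\<in>M. dist y p < d \<longrightarrow> y \<in> V \<and> F y = n y"
      using d UF(3) by (auto simp: dist_commute subset_iff)
    then show ?thesis using der d(1) by blast
  qed
  show "n differentiable (at p within M)" if p: "p \<in> M \<inter> V" for p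
  proof -
    obtain F F' d where FF: "(F has_derivative F') (at p)" "d > 0" "\<forall>y\<in>M. dist y p < d \<longrightarrow> y \<in> V \<and> F y = n y"
      using loc[OF p] by blast
    have "(F has_derivative F') (at p within M)" using FF(1) has_derivative_at_withinI by blast
    then have "(n has_derivative F') (at p within M)"
      by (rule has_derivative_transform_within[OF _ FF(2)]) (use p FF(3) in auto)
    then show ?thesis unfolding differentiable_def by blast
  qed
  show "continuous_on (M \<inter> V) n"
  proof (unfold continuous_on_eq_continuous_within, intro ballI)
    fix p assume p: "p \<in> M \<inter> V"
    obtain F F' d where FF: "(F has_derivative F') (at p)" "d > 0" "\<forall>y\<in>M. dist y p < d \<longrightarrow> y \<in> V \<and> F y = n y"
      using loc[OF p] by blast
    have "continuous (at p within M \<inter> V) F"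
      using FF(1) has_derivative_continuous continuous_at_imp_continuous_at_within by blast
    then show "continuous (at p within M \<inter> V) n"
      by (rule continuous_transform_within[OF _ FF(2) p]) (use FF(3) in auto)
  qed
qed



lemma abstract_ratio:
  fixes H :: "'a::euclidean_space measure" and p :: "'a \<Rightarrow> 'a" and F G :: "'a \<Rightarrow> real"
  assumes setsH: "sets H = sets borel"
    and emH: "\<And>B. B \<in> sets borel \<Longrightarrow> emeasure H B = hausdorff_outer s B"
    and s: "s > 0"
    and A: "closed A" and S: "closed S" and pA: "p ` A = S"
    and al: "0 < \<alpha>" "\<alpha> \<le> \<beta>"
    and lip: "\<And>a b. a\<in>A \<Longrightarrow> b\<in>A \<Longrightarrow> \<alpha> * dist a b \<le> dist (p a) (p b) \<and> dist (p a) (p b) \<le> \<beta> * dist a b"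
    and pc: "continuous_on A p"
    and Fc: "continuous_on UNIV F" and F0: "\<And>v. v\<in>S \<Longrightarrow> 0 \<le> F v \<and> F v \<le> K"
    and K: "0 \<le> K" and eta: "0 \<le> \<eta>"
    and Gm: "(\<lambda>y. indicator A y * G y) \<in> borel_measurable borel"
    and G: "\<And>y. y\<in>A \<Longrightarrow> 0 \<le> G y \<and> \<bar>G y - F (p y)\<bar> \<le> \<eta>"
  shows "\<bar>(LINT y:A|H. G y)/measure H A - (LINT v:S|H. F v)/measure H S\<bar> \<le> \<eta> + ((\<beta>/\<alpha>) powr s - 1) * K"
proof -
  define p0 where "p0 y = (if y \<in> A then p y else 0)" for y
  have Ab: "A \<in> sets borel" "S \<in> sets borel" using A S by auto
  have p0m: "p0 \<in> borel_measurable borel"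
    unfolding p0_def by (rule borel_measurable_continuous_on_if) (use Ab pc in auto)
  have pre: "p -` B \<inter> A \<in> sets borel" if "B \<in> sets borel" for B
  proof -
    have "p -` B \<inter> A = p0 -` B \<inter> A" by (auto simp: p0_def)
    moreover have "p0 -` B \<in> sets borel" using measurable_sets[OF p0m that] by simp
    ultimately show ?thesis using Ab by auto
  qed
  have inj: "inj_on p A"
  proof (rule inj_onI)
    fix a b assume ab: "a \<in> A" "b \<in> A" "p a = p b"
    then have "\<alpha> * dist a b \<le> 0" using lip[of a b] by simp
    then show "a = b" using al by (simp add: mult_le_0_iff)
  qed
  define q where "q = inv_into A p"
  have cmp1: "hausdorff_outer s (B \<inter> S) \<le> ennreal (\<beta> powr s) * hausdorff_outer s (p -` B \<inter> A)" for B
  proof -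
    have "p ` (p -` B \<inter> A) = B \<inter> S" using pA by auto
    moreover have "hausdorff_outer s (p ` (p -` B \<inter> A)) \<le> ennreal (\<beta> powr s) * hausdorff_outer s (p -` B \<inter> A)"
      by (rule hausdorff_outer_lipschitz) (use al s lip in auto)
    ultimately show ?thesis by simp
  qed
  have cmp2: "hausdorff_outer s (p -` B \<inter> A) \<le> ennreal ((1/\<alpha>) powr s) * hausdorff_outer s (B \<inter> S)" for B
  proof -
    have img: "q ` (B \<inter> S) = p -` B \<inter> A"
    proof (rule set_eqI, rule iffI)
      fix y assume "y \<in> q ` (B \<inter> S)"
      then obtain u where u: "u \<in> B" "u \<in> S" "y = q u" by blast
      then have "u \<in> p ` A" using pA by auto
      then show "y \<in> p -` B \<inter> A" using u unfolding q_def by (auto simp: inv_into_into f_inv_into_f)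
    next
      fix y assume a: "y \<in> p -` B \<inter> A"
      then have "q (p y) = y" unfolding q_def using inj by (simp add: inv_into_f_f)
      moreover have "p y \<in> B \<inter> S" using a pA by auto
      ultimately show "y \<in> q ` (B \<inter> S)" by force
    qed
    have L: "dist (q u) (q v) \<le> (1/\<alpha>) * dist u v" if "u \<in> B \<inter> S" "v \<in> B \<inter> S" for u v
    proof -
      have uv: "u \<in> p ` A" "v \<in> p ` A" using that pA by auto
      then have "q u \<in> A" "q v \<in> A" "p (q u) = u" "p (q v) = v"
        unfolding q_def by (auto simp: inv_into_into f_inv_into_f)
      then have "\<alpha> * dist (q u) (q v) \<le> dist u v" using lip[of "q u" "q v"] by auto
      then show ?thesis using al by (simp add: field_simps)
    qed
    have "hausdorff_outer s (q ` (B \<inter> S)) \<le> ennreal ((1/\<alpha>) powr s) * hausdorff_outer s (B \<inter> S)"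
      by (rule hausdorff_outer_lipschitz) (use al s L in auto)
    then show ?thesis using img by simp
  qed
  define HA where "HA = density H (indicator A)"
  define \<mu>A where "\<mu>A = distr HA borel p0"
  define \<mu>S where "\<mu>S = density H (indicator S)"
  have sHA: "sets HA = sets borel" unfolding HA_def using setsH by simp
  have sA: "sets \<mu>A = sets borel" "sets \<mu>S = sets borel" unfolding \<mu>A_def \<mu>S_def using setsH by auto
  have p0m': "p0 \<in> HA \<rightarrow>\<^sub>M borel" using p0m unfolding measurable_cong_sets[OF sHA refl] .
  have indA: "indicator A \<in> borel_measurable H" "indicator S \<in> borel_measurable H"
    using Ab setsH by (auto intro: borel_measurable_indicator simp: measurable_cong_sets[OF setsH refl])
  have spaceH: "space H = UNIV" using sets_eq_imp_space_eq[OF setsH] by simp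
  have eA: "emeasure \<mu>A B = emeasure H (p -` B \<inter> A)" if B: "B \<in> sets borel" for B
  proof -
    have "emeasure \<mu>A B = emeasure HA (p0 -` B \<inter> space HA)"
      unfolding \<mu>A_def using p0m' B by (simp add: emeasure_distr)
    also have "\<dots> = emeasure HA (p0 -` B)" using sets_eq_imp_space_eq[OF sHA] by simp
    also have "\<dots> = (\<integral>\<^sup>+x. indicator (p0 -` B \<inter> A) x \<partial>H)"
      unfolding HA_def
      using measurable_sets[OF p0m B] setsH indA
      by (subst emeasure_density) (auto intro!: nn_integral_cong simp: indicator_def)
    also have "\<dots> = emeasure H (p0 -` B \<inter> A)"
      using measurable_sets[OF p0m B] Ab setsH by (intro nn_integral_indicator) auto
    also have "p0 -` B \<inter> A = p -` B \<inter> A" by (auto simp: p0_def)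
    finally show ?thesis .
  qed
  have eS: "emeasure \<mu>S B = emeasure H (B \<inter> S)" if B: "B \<in> sets borel" for B
  proof -
    have "emeasure \<mu>S B = (\<integral>\<^sup>+x. indicator (B \<inter> S) x \<partial>H)"
      unfolding \<mu>S_def
      using B setsH indA
      by (subst emeasure_density) (auto intro!: nn_integral_cong simp: indicator_def)
    also have "\<dots> = emeasure H (B \<inter> S)"
      using B Ab setsH by (intro nn_integral_indicator) auto
    finally show ?thesis .
  qed
  define a where "a = (1/\<alpha>) powr s"
  define b where "b = \<beta> powr s"
  have le1: "\<mu>S \<le> scale_measure (ennreal b) \<mu>A"
  proof (subst le_measure)
    show "sets \<mu>S = sets (scale_measure (ennreal b) \<mu>A)" using sA by simp
    show "\<forall>B\<in>sets \<mu>S. emeasure \<mu>S B \<le> emeasure (scale_measure (ennreal b) \<mu>A) B"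
      using sA Ab pre by (auto simp: eA eS emH cmp1 b_def)
  qed
  have le2: "\<mu>A \<le> scale_measure (ennreal a) \<mu>S"
  proof (subst le_measure)
    show "sets \<mu>A = sets (scale_measure (ennreal a) \<mu>S)" using sA by simp
    show "\<forall>B\<in>sets \<mu>A. emeasure \<mu>A B \<le> emeasure (scale_measure (ennreal a) \<mu>S) B"
      using sA Ab pre by (auto simp: eA eS emH cmp2 a_def)
  qed
  have intA: "(\<integral>\<^sup>+v. g v \<partial>\<mu>A) = (\<integral>\<^sup>+y. indicator A y * g (p0 y) \<partial>H)"
    if g: "g \<in> borel_measurable borel" for g
  proof -
    have "(\<integral>\<^sup>+v. g v \<partial>\<mu>A) = (\<integral>\<^sup>+y. g (p0 y) \<partial>HA)"
      unfolding \<mu>A_def using p0m' g by (simp add: nn_integral_distr)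
    also have "\<dots> = (\<integral>\<^sup>+y. indicator A y * g (p0 y) \<partial>H)"
      unfolding HA_def using indA g p0m
      by (subst nn_integral_density) (auto simp: measurable_cong_sets[OF setsH refl])
    finally show ?thesis .
  qed
  have intS: "(\<integral>\<^sup>+v. g v \<partial>\<mu>S) = (\<integral>\<^sup>+v. indicator S v * g v \<partial>H)"
    if g: "g \<in> borel_measurable borel" for g
    unfolding \<mu>S_def using indA g
    by (subst nn_integral_density) (auto simp: measurable_cong_sets[OF setsH refl])
  have gen1: "(\<integral>\<^sup>+v. g v \<partial>\<mu>S) \<le> ennreal b * (\<integral>\<^sup>+v. g v \<partial>\<mu>A)"
    if g: "g \<in> borel_measurable borel" for g
  proof -
    have "(\<integral>\<^sup>+v. g v \<partial>\<mu>S) \<le> (\<integral>\<^sup>+v. g v \<partial>scale_measure (ennreal b) \<mu>A)"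
      by (rule nn_integral_mono_measure) (use le1 sA in auto)
    also have "\<dots> = ennreal b * (\<integral>\<^sup>+v. g v \<partial>\<mu>A)"
      using g sA by (subst nn_integral_scale_measure) (auto simp: measurable_cong_sets[OF sA(1) refl])
    finally show ?thesis .
  qed
  have gen2: "(\<integral>\<^sup>+v. g v \<partial>\<mu>A) \<le> ennreal a * (\<integral>\<^sup>+v. g v \<partial>\<mu>S)"
    if g: "g \<in> borel_measurable borel" for g
  proof -
    have "(\<integral>\<^sup>+v. g v \<partial>\<mu>A) \<le> (\<integral>\<^sup>+v. g v \<partial>scale_measure (ennreal a) \<mu>S)"
      by (rule nn_integral_mono_measure) (use le2 sA in auto)
    also have "\<dots> = ennreal a * (\<integral>\<^sup>+v. g v \<partial>\<mu>S)"
      using g sA by (subst nn_integral_scale_measure) (auto simp: measurable_cong_sets[OF sA(2) refl])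
    finally show ?thesis .
  qed
  have Fm: "F \<in> borel_measurable borel" using Fc by (rule borel_measurable_continuous_onI)
  have gF: "(\<lambda>v. ennreal (F v)) \<in> borel_measurable borel" using Fm by measurable
  have ab: "a > 0" "b > 0" unfolding a_def b_def using al by auto
  define IS where "IS = (\<integral>\<^sup>+v. indicator S v * ennreal (F v) \<partial>H)"
  define JA where "JA = (\<integral>\<^sup>+y. indicator A y * ennreal (F (p0 y)) \<partial>H)"
  define hA where "hA = emeasure H A"
  define hS where "hS = emeasure H S"
  have r1: "IS \<le> ennreal b * JA" unfolding IS_def JA_def
    using gen1[OF gF] intA[OF gF] intS[OF gF] by simp
  have r2: "JA \<le> ennreal a * IS" unfolding IS_def JA_def
    using gen2[OF gF] intA[OF gF] intS[OF gF] by simp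
  have one: "(\<lambda>v. 1::ennreal) \<in> borel_measurable borel" by simp
  have hA': "(\<integral>\<^sup>+y. indicator A y * 1 \<partial>H) = hA" unfolding hA_def
    using Ab setsH by (simp add: nn_integral_indicator)
  have hS': "(\<integral>\<^sup>+y. indicator S y * 1 \<partial>H) = hS" unfolding hS_def
    using Ab setsH by (simp add: nn_integral_indicator)
  have r3: "hS \<le> ennreal b * hA"
    using gen1[OF one] intA[OF one] intS[OF one] hA' hS' by simp
  have r4: "hA \<le> ennreal a * hS"
    using gen2[OF one] intA[OF one] intS[OF one] hA' hS' by simp
  have rhs0: "0 \<le> \<eta> + ((\<beta>/\<alpha>) powr s - 1) * K"
  proof -
    have "1 \<le> (\<beta>/\<alpha>) powr s" using al s by (intro ge_one_powr_ge_zero) auto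
    then show ?thesis using K eta by simp
  qed
  show ?thesis
  proof (cases "hS = 0 \<or> hS = \<infinity>")
    case True
    have "measure H A = 0 \<and> measure H S = 0"
    proof (cases "hS = 0")
      case True
      then have "hA = 0" using r4 by simp
      then show ?thesis using True unfolding hA_def hS_def measure_def by simp
    next
      case False
      then have "hS = \<infinity>" using \<open>hS = 0 \<or> hS = \<infinity>\<close> by simp
      then have "hA = \<infinity>" using r3 by (auto simp: ennreal_mult_eq_top_iff top_unique)
      then show ?thesis using \<open>hS = \<infinity>\<close> unfolding hA_def hS_def measure_def by simp
    qed
    then show ?thesis using rhs0 by simp
  next
    case False
    then have hS0: "0 < hS" "hS < \<infinity>" by (auto simp: zero_less_iff_neq_zero less_top)
    have "ennreal a * hS < \<infinity>" using hS0 by (simp add: ennreal_mult_less_top)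
    then have hAf: "hA < \<infinity>" using r4 by (rule le_less_trans[rotated])
    have hA0: "0 < hA"
    proof (rule ccontr)
      assume "\<not> 0 < hA" then have "hA = 0" by (simp add: zero_less_iff_neq_zero)
      then show False using r3 hS0 by simp
    qed
    have ABH: "A \<in> sets H" "S \<in> sets H" using Ab setsH by auto
    define fS where "fS v = indicator S v * F v" for v
    define fJ where "fJ y = indicator A y * F (p0 y)" for y
    define fG where "fG y = indicator A y * G y" for y
    have mS: "fS \<in> borel_measurable H" unfolding fS_def measurable_cong_sets[OF setsH refl]
      using Ab Fm by measurable
    have mJ: "fJ \<in> borel_measurable H" unfolding fJ_def measurable_cong_sets[OF setsH refl]
      using Ab Fm p0m by measurable
    have mG: "fG \<in> borel_measurable H" unfolding fG_def measurable_cong_sets[OF setsH refl]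
      using Gm .
    have pS: "p0 y \<in> S" if "y \<in> A" for y using that pA by (auto simp: p0_def)
    have intgS: "integrable H fS"
      by (rule integrableI_bounded_set[of S _ _ K]) (use ABH mS hS0 F0 in \<open>auto simp: fS_def hS_def\<close>)
    have intgJ: "integrable H fJ"
      by (rule integrableI_bounded_set[of A _ _ K]) (use ABH mJ hAf F0 pS in \<open>auto simp: fJ_def hA_def\<close>)
    have Gb: "\<bar>G y\<bar> \<le> K + \<eta>" if "y \<in> A" for y
    proof -
      have "F (p y) \<le> K" using F0 pA that by auto
      then show ?thesis using G[OF that] by linarith
    qed
    have intgG: "integrable H fG"
      by (rule integrableI_bounded_set[of A _ _ "K + \<eta>"]) (use ABH mG hAf Gb in \<open>auto simp: fG_def hA_def\<close>)
    have intgA: "integrable H (indicator A :: 'a \<Rightarrow> real)" "integrable H (indicator S :: 'a \<Rightarrow> real)"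
      using ABH hAf hS0 unfolding hA_def hS_def by auto
    define iS where "iS = integral\<^sup>L H fS"
    define jA where "jA = integral\<^sup>L H fJ"
    define iA where "iA = integral\<^sup>L H fG"
    define mA where "mA = measure H A"
    define mSS where "mSS = measure H S"
    have LG: "(LINT y:A|H. G y) = iA" unfolding iA_def fG_def set_lebesgue_integral_def by simp
    have LF: "(LINT v:S|H. F v) = iS" unfolding iS_def fS_def set_lebesgue_integral_def by simp
    have iS0: "0 \<le> iS" unfolding iS_def fS_def using F0 by (intro integral_nonneg_AE) (auto simp: indicator_def)
    have jA0: "0 \<le> jA" unfolding jA_def fJ_def using F0 pS by (intro integral_nonneg_AE) (auto simp: indicator_def)
    have ISe: "IS = ennreal iS"
    proof -
      have "IS = (\<integral>\<^sup>+v. ennreal (fS v) \<partial>H)" unfolding IS_def fS_def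
        using F0 by (intro nn_integral_cong) (auto simp: indicator_def)
      also have "\<dots> = ennreal iS" unfolding iS_def using F0
        by (intro nn_integral_eq_integral[OF intgS]) (auto simp: fS_def indicator_def)
      finally show ?thesis .
    qed
    have JAe: "JA = ennreal jA"
    proof -
      have "JA = (\<integral>\<^sup>+v. ennreal (fJ v) \<partial>H)" unfolding JA_def fJ_def
        using F0 pS by (intro nn_integral_cong) (auto simp: indicator_def)
      also have "\<dots> = ennreal jA" unfolding jA_def using F0 pS
        by (intro nn_integral_eq_integral[OF intgJ]) (auto simp: fJ_def indicator_def)
      finally show ?thesis .
    qed
    have hAe: "hA = ennreal mA" unfolding mA_def using hAf unfolding hA_def by (simp add: emeasure_eq_ennreal_measure)
    have hSe: "hS = ennreal mSS" unfolding mSS_def using hS0 unfolding hS_def by (simp add: emeasure_eq_ennreal_measure)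
    have mA0: "0 < mA" using hA0 hAe by simp
    have mS0: "0 < mSS" using hS0 hSe by simp
    have h1: "jA \<le> a * iS" using r2 ISe JAe ab iS0 by (simp add: ennreal_mult''[symmetric] ennreal_le_iff)
    have h2: "iS \<le> b * jA" using r1 ISe JAe ab jA0 by (simp add: ennreal_mult''[symmetric] ennreal_le_iff)
    have h3: "mA \<le> a * mSS" using r4 hAe hSe ab mS0 by (simp add: ennreal_mult''[symmetric] ennreal_le_iff)
    have h4: "mSS \<le> b * mA" using r3 hAe hSe ab mA0 by (simp add: ennreal_mult''[symmetric] ennreal_le_iff)
    have spH: "A \<inter> space H = A" "S \<inter> space H = S" using spaceH by auto
    have h5a: "iA \<le> jA + \<eta> * mA"
    proof -
      have i2: "integrable H (\<lambda>y. fJ y + \<eta> * indicator A y)" using intgJ intgA by auto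
      have "iA \<le> integral\<^sup>L H (\<lambda>y. fJ y + \<eta> * indicator A y)"
        unfolding iA_def
      proof (rule integral_mono[OF intgG i2])
        fix y show "fG y \<le> fJ y + \<eta> * indicator A y"
        proof (cases "y \<in> A")
          case True then show ?thesis using G[OF True] by (simp add: fG_def fJ_def p0_def abs_le_iff)
        qed (simp add: fG_def fJ_def)
      qed
      also have "\<dots> = jA + \<eta> * mA" unfolding jA_def mA_def using intgJ intgA spH by simp
      finally show ?thesis .
    qed
    have h5b: "jA \<le> iA + \<eta> * mA"
    proof -
      have i2: "integrable H (\<lambda>y. fG y + \<eta> * indicator A y)" using intgG intgA by auto
      have "jA \<le> integral\<^sup>L H (\<lambda>y. fG y + \<eta> * indicator A y)"
        unfolding jA_def
      proof (rule integral_mono[OF intgJ i2])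
        fix y show "fJ y \<le> fG y + \<eta> * indicator A y"
        proof (cases "y \<in> A")
          case True then show ?thesis using G[OF True] by (simp add: fG_def fJ_def p0_def abs_le_iff)
        qed (simp add: fG_def fJ_def)
      qed
      also have "\<dots> = iA + \<eta> * mA" unfolding iA_def mA_def using intgG intgA spH by simp
      finally show ?thesis .
    qed
    have h6: "iS \<le> K * mSS"
    proof -
      have i2: "integrable H (\<lambda>y. K * indicator S y)" using intgA by auto
      have "iS \<le> integral\<^sup>L H (\<lambda>y. K * indicator S y)"
        unfolding iS_def
      proof (rule integral_mono[OF intgS i2])
        fix y show "fS y \<le> K * indicator S y"
        proof (cases "y \<in> S")
          case True then show ?thesis using F0[OF True] by (simp add: fS_def)
        qed (simp add: fS_def)
      qed
      also have "\<dots> = K * mSS" unfolding mSS_def using intgA spH by simp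
      finally show ?thesis .
    qed
    have "\<bar>iA/mA - iS/mSS\<bar> \<le> \<eta> + (a*b - 1) * K"
      by (rule ratio_real_bound[OF mA0 mS0 iS0 ab h1 h2 h3 h4 _ h6]) (use h5a h5b in linarith)
    moreover have "a * b = (\<beta>/\<alpha>) powr s" unfolding a_def b_def using al
      by (simp add: powr_mult[symmetric])
    ultimately show ?thesis unfolding LG LF mA_def mSS_def by simp
  qed
qed



lemma local_graph:
  fixes f :: "'a::euclidean_space \<Rightarrow> real" and Df :: "'a \<Rightarrow> 'a \<Rightarrow> real"
  assumes U: "open U" "x \<in> U" and fd: "\<And>y. y \<in> U \<Longrightarrow> (f has_derivative Df y) (at y)"
    and Dc: "\<And>v. continuous_on U (\<lambda>y. Df y v)"
    and g: "\<And>v. Df x v = g \<bullet> v" and g0: "g \<noteq> 0" and fx: "f x = 0"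
    and MU: "M \<inter> U = {y\<in>U. f y = 0}" and V: "open V" "x \<in> V"
    and eta: "\<eta> > 0" and nu: "\<nu> = g /\<^sub>R norm g"
  shows "\<exists>\<rho>>0. ball x \<rho> \<subseteq> U \<inter> V \<and>
     (\<forall>y1\<in>M \<inter> ball x \<rho>. \<forall>y2\<in>M \<inter> ball x \<rho>.
        \<bar>\<nu> \<bullet> (y1-y2)\<bar> \<le> \<eta> * norm ((y1-y2) - (\<nu> \<bullet> (y1-y2)) *\<^sub>R \<nu>)) \<and>
     (\<forall>w. \<nu> \<bullet> w = 0 \<longrightarrow> norm w \<le> \<rho>/3 \<longrightarrow> (\<exists>t. \<bar>t\<bar> \<le> \<rho>/3 \<and> x + w + t *\<^sub>R \<nu> \<in> M))"
proof -
  define a where "a = norm g"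
  have a0: "a > 0" using g0 a_def by simp
  have nu1: "norm \<nu> = 1" using nu g0 by simp
  have gnu: "g = a *\<^sub>R \<nu>" using nu a0 a_def by simp
  define \<delta> where "\<delta> = a * \<eta> / (2 * (1 + \<eta>))"
  have d0: "\<delta> > 0" using a0 eta by (simp add: \<delta>_def)
  have d1: "\<delta> < a/2"
  proof -
    have "\<eta> / (1 + \<eta>) < 1" using eta by simp
    then have "(a/2) * (\<eta> / (1 + \<eta>)) < (a/2) * 1" using a0 by (intro mult_strict_left_mono) auto
    then show ?thesis unfolding \<delta>_def by simp
  qed
  have d2: "\<delta> * (1+\<eta>) \<le> a * \<eta>"
    unfolding \<delta>_def using a0 eta by (simp add: field_simps)
  define N where "N = real DIM('a)"
  have N0: "N > 0" unfolding N_def by simp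
  have "\<forall>b\<in>Basis. \<exists>r>0. \<forall>z. dist z x < r \<longrightarrow> \<bar>Df z b - Df x b\<bar> < \<delta> / N"
  proof
    fix b :: 'a assume b: "b \<in> Basis"
    have "isCont (\<lambda>y. Df y b) x" using Dc[of b] U continuous_on_eq_continuous_at by blast
    moreover have "\<delta> / N > 0" using d0 N0 by simp
    ultimately show "\<exists>r>0. \<forall>z. dist z x < r \<longrightarrow> \<bar>Df z b - Df x b\<bar> < \<delta> / N"
      unfolding continuous_at_eps_delta by (simp add: dist_real_def)
  qed
  then obtain r where r: "\<And>b. b\<in>Basis \<Longrightarrow> r b > 0 \<and> (\<forall>z. dist z x < r b \<longrightarrow> \<bar>Df z b - Df x b\<bar> < \<delta> / N)"
    by metis
  define r1 where "r1 = Min (r ` Basis)"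
  have r1: "r1 > 0" "\<And>b. b\<in>Basis \<Longrightarrow> r1 \<le> r b"
    unfolding r1_def using r by (auto simp: Min_gr_iff)
  obtain rU where rU: "rU > 0" "ball x rU \<subseteq> U" using U open_contains_ball by blast
  obtain rV where rV: "rV > 0" "ball x rV \<subseteq> V" using V open_contains_ball by blast
  define \<rho> where "\<rho> = min r1 (min rU rV)"
  have rho0: "\<rho> > 0" unfolding \<rho>_def using r1 rU rV by simp
  have ballUV: "ball x \<rho> \<subseteq> U \<inter> V" unfolding \<rho>_def using rU rV by auto
  have onb: "onorm (\<lambda>v. Df z v - Df x v) \<le> \<delta>" if z: "z \<in> ball x \<rho>" for z
  proof -
    have zU: "z \<in> U" using z ballUV by auto
    have l1: "linear (Df z)" using fd[OF zU] has_derivative_linear by blast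
    have l2: "linear (Df x)" using fd[OF U(2)] has_derivative_linear by blast
  have linD: "linear (\<lambda>v. Df z v - Df x v)" using l1 l2 by (rule linear_compose_sub)
    have "onorm (\<lambda>v. Df z v - Df x v) \<le> (\<Sum>b\<in>Basis. \<bar>Df z b - Df x b\<bar>)"
      using onorm_lin_bound[OF linD] .
    also have "\<dots> \<le> (\<Sum>b\<in>(Basis::'a set). \<delta> / N)"
    proof (intro sum_mono less_imp_le)
      fix b :: 'a assume b: "b \<in> Basis"
      have "dist z x < r b" using z r1(2)[OF b] unfolding \<rho>_def by (auto simp: dist_commute)
      then show "\<bar>Df z b - Df x b\<bar> < \<delta> / N" using r[OF b] by blast
    qed
    also have "\<dots> = \<delta>" unfolding N_def by simp
    finally show ?thesis .
  qed
  have lin: "\<bar>f p - f q - g \<bullet> (p - q)\<bar> \<le> \<delta> * norm (p - q)" if pq: "p \<in> ball x \<rho>" "q \<in> ball x \<rho>" for p q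
  proof -
    have seg: "q + t *\<^sub>R (p - q) \<in> ball x \<rho>" if t: "t \<in> {0..1}" for t
    proof -
      have "q + t *\<^sub>R (p - q) = (1 - t) *\<^sub>R q + t *\<^sub>R p" by (simp add: algebra_simps)
      moreover have "(1 - t) *\<^sub>R q + t *\<^sub>R p \<in> ball x \<rho>"
        using convex_ball[of x \<rho>] pq t unfolding convex_alt by auto
      ultimately show ?thesis by simp
    qed
    have der: "(f has_derivative Df z) (at z within ball x \<rho>)" if z: "z \<in> ball x \<rho>" for z
    proof -
      have "z \<in> U" using z ballUV by auto
      then show ?thesis using fd has_derivative_at_withinI by blast
    qed
    have onb2: "onorm (Df z - Df x) \<le> \<delta>" if z: "z \<in> ball x \<rho>" for z
      using onb[OF z] by (simp add: fun_diff_def)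
    have xb: "x \<in> ball x \<rho>" using rho0 by simp
    have "norm (f p - f q - Df x (p - q)) \<le> norm (p - q) * \<delta>"
      by (rule differentiable_bound_linearization[OF seg der onb2 xb])
    then show ?thesis by (simp add: g mult.commute)
  qed
  have fcont: "continuous_on (ball x \<rho>) f"
  proof -
    have "\<forall>z\<in>ball x \<rho>. f differentiable (at z)" using fd ballUV differentiableI by blast
    then show ?thesis
      by (meson continuous_at_imp_continuous_on differentiable_imp_continuous_within)
  qed
  have P1: "\<bar>\<nu> \<bullet> (y1-y2)\<bar> \<le> \<eta> * norm ((y1-y2) - (\<nu> \<bullet> (y1-y2)) *\<^sub>R \<nu>)"
    if y: "y1 \<in> M \<inter> ball x \<rho>" "y2 \<in> M \<inter> ball x \<rho>" for y1 y2
  proof -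
    define d where "d = y1 - y2"
    define t where "t = \<nu> \<bullet> d"
    define w where "w = d - t *\<^sub>R \<nu>"
    have f0: "f y1 = 0" "f y2 = 0" using y MU ballUV by auto
    have "\<bar>g \<bullet> d\<bar> \<le> \<delta> * norm d" using lin[of y1 y2] y f0 unfolding d_def by auto
    moreover have "g \<bullet> d = a * t" unfolding gnu t_def by simp
    moreover have "norm d \<le> norm w + \<bar>t\<bar>"
    proof -
      have "d = w + t *\<^sub>R \<nu>" unfolding w_def by simp
      then have "norm d \<le> norm w + norm (t *\<^sub>R \<nu>)" by (metis norm_triangle_ineq)
      then show ?thesis using nu1 by simp
    qed
    ultimately have "a * \<bar>t\<bar> \<le> \<delta> * (norm w + \<bar>t\<bar>)"
    proof -
      assume h: "\<bar>g \<bullet> d\<bar> \<le> \<delta> * norm d" "g \<bullet> d = a * t" "norm d \<le> norm w + \<bar>t\<bar>"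
      have "a * \<bar>t\<bar> = \<bar>g \<bullet> d\<bar>" using h(2) a0 by (simp add: abs_mult)
      also have "\<dots> \<le> \<delta> * norm d" by (rule h(1))
      also have "\<dots> \<le> \<delta> * (norm w + \<bar>t\<bar>)" using h(3) d0 by (intro mult_left_mono) auto
      finally show ?thesis .
    qed
    then have "(a - \<delta>) * \<bar>t\<bar> \<le> \<delta> * norm w" by (simp add: algebra_simps)
    moreover have "\<delta> * norm w \<le> (a - \<delta>) * (\<eta> * norm w)"
    proof -
      have "\<delta> \<le> (a - \<delta>) * \<eta>" using d2 by (simp add: algebra_simps)
      then show ?thesis by (metis mult.assoc mult_right_mono norm_ge_zero)
    qed
    ultimately have "(a - \<delta>) * \<bar>t\<bar> \<le> (a - \<delta>) * (\<eta> * norm w)" by linarith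
    moreover have "a - \<delta> > 0" using d1 a0 by simp
    ultimately have "\<bar>t\<bar> \<le> \<eta> * norm w" by simp
    then show ?thesis unfolding t_def w_def d_def .
  qed
  have P2: "\<exists>t. \<bar>t\<bar> \<le> \<rho>/3 \<and> x + w + t *\<^sub>R \<nu> \<in> M" if w: "\<nu> \<bullet> w = 0" "norm w \<le> \<rho>/3" for w
  proof -
    define \<phi> where "\<phi> t = f (x + w + t *\<^sub>R \<nu>)" for t
    have inball: "x + w + t *\<^sub>R \<nu> \<in> ball x \<rho>" if t: "\<bar>t\<bar> \<le> \<rho>/3" for t
    proof -
      have "norm (w + t *\<^sub>R \<nu>) \<le> norm w + \<bar>t\<bar>"
        using norm_triangle_ineq[of w "t *\<^sub>R \<nu>"] nu1 by simp
      also have "\<dots> < \<rho>" using w t rho0 by simp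
      finally have "dist (x + w + t *\<^sub>R \<nu>) x < \<rho>" by (simp add: dist_norm)
      then show ?thesis by (simp add: dist_commute)
    qed
    have approx: "\<bar>\<phi> t - a * t\<bar> \<le> \<delta> * (2*\<rho>/3)" if t: "\<bar>t\<bar> \<le> \<rho>/3" for t
    proof -
      have "\<bar>\<phi> t - f x - g \<bullet> ((x + w + t *\<^sub>R \<nu>) - x)\<bar> \<le> \<delta> * norm ((x + w + t *\<^sub>R \<nu>) - x)"
        unfolding \<phi>_def using lin[OF inball[OF t], of x] rho0 by simp
      moreover have "g \<bullet> ((x + w + t *\<^sub>R \<nu>) - x) = a * t"
        unfolding gnu using w nu1 by (simp add: inner_add_right dot_square_norm)
      moreover have "norm ((x + w + t *\<^sub>R \<nu>) - x) \<le> 2*\<rho>/3"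
      proof -
        have "norm (w + t *\<^sub>R \<nu>) \<le> norm w + \<bar>t\<bar>"
          using norm_triangle_ineq[of w "t *\<^sub>R \<nu>"] nu1 by simp
        then show ?thesis using w t by simp
      qed
      moreover have "\<delta> * norm ((x + w + t *\<^sub>R \<nu>) - x) \<le> \<delta> * (2*\<rho>/3)"
        using calculation(3) d0 by (intro mult_left_mono) auto
      ultimately show ?thesis using fx by simp
    qed
    have c: "continuous_on {-\<rho>/3..\<rho>/3} \<phi>"
    proof -
      have "continuous_on {-\<rho>/3..\<rho>/3} (\<lambda>t. x + w + t *\<^sub>R \<nu>)" by (intro continuous_intros)
      moreover have "(\<lambda>t. x + w + t *\<^sub>R \<nu>) ` {-\<rho>/3..\<rho>/3} \<subseteq> ball x \<rho>" using inball by auto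
      ultimately show ?thesis unfolding \<phi>_def
        using continuous_on_compose2[OF fcont] by blast
    qed
    have ec: "\<delta> * (2*\<rho>/3) \<le> a * (\<rho>/3)"
    proof -
      have "\<delta> * (2*\<rho>/3) \<le> (a/2) * (2*\<rho>/3)" using d1 rho0 by (intro mult_right_mono) auto
      also have "\<dots> = a * (\<rho>/3)" by simp
      finally show ?thesis .
    qed
    have lo: "\<phi> (-\<rho>/3) \<le> 0"
    proof -
      have "\<bar>\<phi> (-\<rho>/3) - a * (-\<rho>/3)\<bar> \<le> \<delta> * (2*\<rho>/3)" using approx[of "-\<rho>/3"] rho0 by simp
      moreover have "a * (-\<rho>/3) = - (a * (\<rho>/3))" by simp
      ultimately show ?thesis using ec by (simp only: abs_le_iff) linarith
    qed
    have hi: "0 \<le> \<phi> (\<rho>/3)"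
    proof -
      have "\<bar>\<phi> (\<rho>/3) - a * (\<rho>/3)\<bar> \<le> \<delta> * (2*\<rho>/3)" using approx[of "\<rho>/3"] rho0 by simp
      then show ?thesis using ec by (simp only: abs_le_iff) linarith
    qed
    obtain t where t: "-\<rho>/3 \<le> t" "t \<le> \<rho>/3" "\<phi> t = 0"
      using IVT'[of \<phi> "-\<rho>/3" 0 "\<rho>/3", OF lo hi _ c] rho0 by auto
    have tt: "\<bar>t\<bar> \<le> \<rho>/3" using t by simp
    have "x + w + t *\<^sub>R \<nu> \<in> U" using inball[OF tt] ballUV by auto
    then have "x + w + t *\<^sub>R \<nu> \<in> M" using MU t(3) unfolding \<phi>_def by auto
    then show ?thesis using tt by blast
  qed
  show ?thesis using rho0 ballUV P1 P2 by blast
qed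



lemma tangent_eq:
  fixes f :: "'a::euclidean_space \<Rightarrow> real"
  assumes xM: "x \<in> M" and U: "open U" "x \<in> U"
    and fd: "\<And>y. y \<in> U \<Longrightarrow> (f has_derivative Df y) (at y)"
    and g: "\<And>v. Df x v = g \<bullet> v" and g0: "g \<noteq> 0"
    and MU: "M \<inter> U = {y\<in>U. f y = 0}" and nu: "\<nu> = g /\<^sub>R norm g"
    and LG: "\<And>\<eta>. \<eta> > 0 \<Longrightarrow> \<exists>\<rho>>0. ball x \<rho> \<subseteq> U \<inter> V \<and>
     (\<forall>y1\<in>M \<inter> ball x \<rho>. \<forall>y2\<in>M \<inter> ball x \<rho>.
        \<bar>\<nu> \<bullet> (y1-y2)\<bar> \<le> \<eta> * norm ((y1-y2) - (\<nu> \<bullet> (y1-y2)) *\<^sub>R \<nu>)) \<and>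
     (\<forall>w. \<nu> \<bullet> w = 0 \<longrightarrow> norm w \<le> \<rho>/3 \<longrightarrow> (\<exists>t. \<bar>t\<bar> \<le> \<rho>/3 \<and> x + w + t *\<^sub>R \<nu> \<in> M))"
  shows "tangent_space M x = {v. \<nu> \<bullet> v = 0}"
proof (rule set_eqI, rule iffI)
  have nu1: "norm \<nu> = 1" using nu g0 by simp
  have nn: "\<nu> \<bullet> \<nu> = 1" using nu1 by (simp add: dot_square_norm)
  fix v assume "v \<in> tangent_space M x"
  then obtain \<gamma> e where ge: "e > 0" "\<forall>t\<in>{-e<..<e}. \<gamma> t \<in> M" "\<gamma> 0 = x"
    "(\<gamma> has_vector_derivative v) (at 0)"
    unfolding tangent_space_def by blast
  have cont: "continuous (at 0) \<gamma>" using ge(4) has_vector_derivative_continuous by blast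
  obtain rU where rU: "rU > 0" "ball x rU \<subseteq> U" using U open_contains_ball by blast
  obtain d where d: "d > 0" "\<forall>t. dist t 0 < d \<longrightarrow> dist (\<gamma> t) (\<gamma> 0) < rU"
    using cont rU(1) unfolding continuous_at_eps_delta by blast
  define d' where "d' = min d e"
  have z: "(f \<circ> \<gamma>) t = 0" if t: "t \<in> ball 0 d'" for t
  proof -
    have "dist (\<gamma> t) x < rU" using d t ge(3) unfolding d'_def by (auto simp: dist_norm)
    then have "\<gamma> t \<in> U" using rU by (auto simp: dist_commute)
    moreover have "t \<in> {-e<..<e}" using t unfolding d'_def by (auto simp: dist_norm abs_less_iff)
    then have "\<gamma> t \<in> M" using ge(2) by blast
    ultimately show ?thesis using MU by auto
  qed
  have D1: "((f \<circ> \<gamma>) has_derivative (Df x \<circ> (\<lambda>h. h *\<^sub>R v))) (at 0)"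
  proof (rule diff_chain_at)
    show "(\<gamma> has_derivative (\<lambda>h. h *\<^sub>R v)) (at 0)" using ge(4) unfolding has_vector_derivative_def .
    show "(f has_derivative Df x) (at (\<gamma> 0))" using fd[OF U(2)] ge(3) by simp
  qed
  have D2: "((f \<circ> \<gamma>) has_derivative (\<lambda>_. 0)) (at 0)"
  proof (rule has_derivative_transform_within_open[of "\<lambda>_. 0" "\<lambda>_. 0" 0 UNIV "ball 0 d'"])
    show "((\<lambda>_. 0::real) has_derivative (\<lambda>_. 0)) (at 0)" by simp
    show "open (ball (0::real) d')" by simp
    show "(0::real) \<in> ball 0 d'" using d ge unfolding d'_def by simp
    show "\<And>t. t \<in> ball 0 d' \<Longrightarrow> 0 = (f \<circ> \<gamma>) t" using z by simp
  qed
  have "(Df x \<circ> (\<lambda>h. h *\<^sub>R v)) = (\<lambda>_. 0)" using has_derivative_unique[OF D1 D2] .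
  then have "Df x v = 0" by (metis comp_apply scaleR_one)
  then have "g \<bullet> v = 0" using g by simp
  then show "v \<in> {v. \<nu> \<bullet> v = 0}" using nu by simp
next
  have nu1: "norm \<nu> = 1" using nu g0 by simp
  have nn: "\<nu> \<bullet> \<nu> = 1" using nu1 by (simp add: dot_square_norm)
  fix v assume "v \<in> {v. \<nu> \<bullet> v = 0}"
  then have nv: "\<nu> \<bullet> v = 0" by simp
  show "v \<in> tangent_space M x"
  proof (cases "v = 0")
    case True
    have "(\<lambda>t::real. x) t \<in> M" for t using xM by simp
    then show ?thesis unfolding tangent_space_def using True
      by (intro CollectI exI[of _ "\<lambda>t::real. x"] exI[of _ 1]) auto
  next
    case False
    then have vpos: "norm v > 0" by simp
    obtain \<rho>0 where r0: "\<rho>0 > 0" "ball x \<rho>0 \<subseteq> U \<inter> V"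
      "\<forall>y1\<in>M \<inter> ball x \<rho>0. \<forall>y2\<in>M \<inter> ball x \<rho>0. \<bar>\<nu> \<bullet> (y1-y2)\<bar> \<le> 1 * norm ((y1-y2) - (\<nu> \<bullet> (y1-y2)) *\<^sub>R \<nu>)"
      "\<forall>w. \<nu> \<bullet> w = 0 \<longrightarrow> norm w \<le> \<rho>0/3 \<longrightarrow> (\<exists>t. \<bar>t\<bar> \<le> \<rho>0/3 \<and> x + w + t *\<^sub>R \<nu> \<in> M)"
      using LG[of 1] by auto
    define h where "h w = (SOME t. \<bar>t\<bar> \<le> \<rho>0/3 \<and> x + w + t *\<^sub>R \<nu> \<in> M)" for w
    have hspec: "\<bar>h w\<bar> \<le> \<rho>0/3 \<and> x + w + h w *\<^sub>R \<nu> \<in> M" if "\<nu> \<bullet> w = 0" "norm w \<le> \<rho>0/3" for w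
      unfolding h_def by (rule someI_ex) (use r0(4) that in blast)
    define \<gamma> where "\<gamma> s = x + s *\<^sub>R v + h (s *\<^sub>R v) *\<^sub>R \<nu>" for s
    define e where "e = \<rho>0 / (3 * norm v)"
    have e0: "e > 0" unfolding e_def using r0 vpos by simp
    have inM: "\<gamma> s \<in> M \<and> \<bar>h (s *\<^sub>R v)\<bar> \<le> \<rho>0/3" if s: "\<bar>s\<bar> < e" for s
    proof -
      have "norm (s *\<^sub>R v) \<le> \<rho>0/3" using s vpos unfolding e_def by (simp add: field_simps)
      moreover have "\<nu> \<bullet> (s *\<^sub>R v) = 0" using nv by simp
      ultimately show ?thesis using hspec unfolding \<gamma>_def by blast
    qed
    have proj: "\<nu> \<bullet> (\<gamma> s - x) = h (s *\<^sub>R v)" "(\<gamma> s - x) - (\<nu> \<bullet> (\<gamma> s - x)) *\<^sub>R \<nu> = s *\<^sub>R v" for s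
      unfolding \<gamma>_def using nv nn by (auto simp: inner_add_right algebra_simps)
    have nrm: "norm (\<gamma> s - x) \<le> \<bar>s\<bar> * norm v + \<bar>h (s *\<^sub>R v)\<bar>" for s
      unfolding \<gamma>_def using norm_triangle_ineq[of "s *\<^sub>R v" "h (s *\<^sub>R v) *\<^sub>R \<nu>"] nu1 by simp
    have xin: "x \<in> M \<inter> ball x r" if "r > 0" for r using xM that by simp
    have hb1: "\<bar>h (s *\<^sub>R v)\<bar> \<le> \<bar>s\<bar> * norm v" if s: "\<bar>s\<bar> < e" for s
    proof -
      have sv: "\<bar>s\<bar> * norm v < \<rho>0/3" using s vpos unfolding e_def by (simp add: field_simps)
      have "norm (\<gamma> s - x) < \<rho>0" using nrm[of s] inM[OF s] sv r0(1) by linarith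
      then have "\<gamma> s \<in> M \<inter> ball x \<rho>0" using inM[OF s] by (auto simp: dist_norm norm_minus_commute)
      then have "\<bar>\<nu> \<bullet> (\<gamma> s - x)\<bar> \<le> 1 * norm ((\<gamma> s - x) - (\<nu> \<bullet> (\<gamma> s - x)) *\<^sub>R \<nu>)"
        using r0(3) xin[OF r0(1)] by blast
      then show ?thesis using proj[of s] by simp
    qed
    have g0': "\<gamma> 0 = x" using hb1[of 0] e0 unfolding \<gamma>_def by simp
    have deriv: "(\<gamma> has_vector_derivative v) (at 0)"
      unfolding has_vector_derivative_def has_derivative_at_alt
    proof (intro conjI allI impI)
      show "bounded_linear (\<lambda>s. s *\<^sub>R v)" by (rule bounded_linear_scaleR_left)
      fix \<epsilon> :: real assume \<epsilon>: "\<epsilon> > 0"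
      obtain \<rho> where r: "\<rho> > 0"
        "\<forall>y1\<in>M \<inter> ball x \<rho>. \<forall>y2\<in>M \<inter> ball x \<rho>. \<bar>\<nu> \<bullet> (y1-y2)\<bar> \<le> (\<epsilon> / norm v) * norm ((y1-y2) - (\<nu> \<bullet> (y1-y2)) *\<^sub>R \<nu>)"
        using LG[of "\<epsilon> / norm v"] \<epsilon> vpos by auto
      define d where "d = min e (\<rho> / (2 * norm v))"
      have d0: "d > 0" unfolding d_def using e0 r vpos by simp
      have "\<forall>s. norm (s - 0) < d \<longrightarrow> norm (\<gamma> s - \<gamma> 0 - (s - 0) *\<^sub>R v) \<le> \<epsilon> * norm (s - 0)"
      proof (intro allI impI)
        fix s :: real assume s: "norm (s - 0) < d"
        have se: "\<bar>s\<bar> < e" using s unfolding d_def by simp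
        have "norm (\<gamma> s - x) \<le> 2 * (\<bar>s\<bar> * norm v)" using nrm[of s] hb1[OF se] by simp
        also have "\<dots> < \<rho>"
        proof -
          have "\<bar>s\<bar> < \<rho> / (2 * norm v)" using s unfolding d_def by simp
          then show ?thesis using vpos by (simp add: field_simps)
        qed
        finally have "\<gamma> s \<in> M \<inter> ball x \<rho>" using inM[OF se] by (auto simp: dist_norm norm_minus_commute)
        then have "\<bar>\<nu> \<bullet> (\<gamma> s - x)\<bar> \<le> (\<epsilon> / norm v) * norm ((\<gamma> s - x) - (\<nu> \<bullet> (\<gamma> s - x)) *\<^sub>R \<nu>)"
          using r(2) xin[OF r(1)] by blast
        then have hh: "\<bar>h (s *\<^sub>R v)\<bar> \<le> \<epsilon> * \<bar>s\<bar>" using proj[of s] vpos by simp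
        have "\<gamma> s - \<gamma> 0 - (s - 0) *\<^sub>R v = h (s *\<^sub>R v) *\<^sub>R \<nu>" unfolding g0' unfolding \<gamma>_def by simp
        then show "norm (\<gamma> s - \<gamma> 0 - (s - 0) *\<^sub>R v) \<le> \<epsilon> * norm (s - 0)" using hh nu1 by simp
      qed
      then show "\<exists>d>0. \<forall>s. norm (s - 0) < d \<longrightarrow> norm (\<gamma> s - \<gamma> 0 - (s - 0) *\<^sub>R v) \<le> \<epsilon> * norm (s - 0)"
        using d0 by blast
    qed
    have "\<forall>t\<in>{-e<..<e}. \<gamma> t \<in> M" using inM by auto
    then show ?thesis unfolding tangent_space_def using e0 g0' deriv by blast
  qed
qed



theorem mainTheorem4:
  fixes M V :: "'a::euclidean_space set" and n :: "'a \<Rightarrow> 'a" and x :: 'a and m :: nat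
  assumes "m = DIM('a) - 1" and "m \<ge> 2"
    and "smooth_hypersurface M" and "x \<in> M"
    and "open V" and "x \<in> V"
    and "smooth_on_subset (M \<inter> V) n"
    and "\<forall>y\<in>M \<inter> V. norm (n y) = 1 \<and> (\<forall>v\<in>tangent_space M y. n y \<bullet> v = 0)"
  shows "((\<lambda>\<epsilon>. let A = {y \<in> M \<inter> V. dist x y = \<epsilon>}; H = hausdorff_measure (real m - 1) in
              (LINT y:A|H. Omega n x y) / measure H A)
          \<longlongrightarrow> psi m (tangent_space M x) (shape_operator M n x)) (at_right 0)"
proof -
  note xM = assms(4) and oV = assms(5) and xV = assms(6)
  define s where "s = real m - 1"
  have s1: "s \<ge> 1" unfolding s_def using assms(2) by simp
  define Hm where "Hm = (hausdorff_measure s :: 'a measure)"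
  obtain U f where Uf: "x \<in> U" "smooth_on U f" "\<forall>y\<in>U. frechet_derivative f (at y) \<noteq> (\<lambda>v. 0)"
      "M \<inter> U = {y\<in>U. f y = (0::real)}"
    using assms(3) xM unfolding smooth_hypersurface_def by blast
  define Df where "Df y = frechet_derivative f (at y)" for y
  have oU: "open U" using smooth_on_facts(1)[OF Uf(2)] .
  have fd: "(f has_derivative Df y) (at y)" if "y \<in> U" for y
    unfolding Df_def using smooth_on_facts(2)[OF Uf(2) that] .
  have Dc: "continuous_on U (\<lambda>y. Df y v)" for v
    unfolding Df_def using smooth_on_facts(3)[OF Uf(2)] .
  have linx: "linear (Df x)" using fd[OF Uf(1)] has_derivative_linear by blast
  define g where "g = (\<Sum>b\<in>Basis. Df x b *\<^sub>R b)"
  have gx: "Df x v = g \<bullet> v" for v unfolding g_def by (rule lin_repr[OF linx])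
  have g0: "g \<noteq> 0"
  proof
    assume "g = 0"
    then have "Df x = (\<lambda>v. 0)" using gx by auto
    then show False using Uf(3) Uf(1) unfolding Df_def by blast
  qed
  have fx: "f x = 0" using xM Uf(1) Uf(4) by auto
  define \<nu> where "\<nu> = g /\<^sub>R norm g"
  have nu1: "norm \<nu> = 1" unfolding \<nu>_def using g0 by simp
  have LG: "\<exists>\<rho>>0. ball x \<rho> \<subseteq> U \<inter> V \<and>
     (\<forall>y1\<in>M \<inter> ball x \<rho>. \<forall>y2\<in>M \<inter> ball x \<rho>.
        \<bar>\<nu> \<bullet> (y1-y2)\<bar> \<le> \<eta> * norm ((y1-y2) - (\<nu> \<bullet> (y1-y2)) *\<^sub>R \<nu>)) \<and>
     (\<forall>w. \<nu> \<bullet> w = 0 \<longrightarrow> norm w \<le> \<rho>/3 \<longrightarrow> (\<exists>t. \<bar>t\<bar> \<le> \<rho>/3 \<and> x + w + t *\<^sub>R \<nu> \<in> M))"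
    if "\<eta> > 0" for \<eta>
    by (rule local_graph[OF oU Uf(1) fd Dc gx g0 fx Uf(4) oV xV that \<nu>_def])
  have TS: "tangent_space M x = {v. \<nu> \<bullet> v = 0}"
    by (rule tangent_eq[OF xM oU Uf(1) fd gx g0 Uf(4) \<nu>_def LG])
  have nfacts: "continuous_on (M \<inter> V) n" "n differentiable (at x within M)"
    using smooth_subset_facts[OF assms(7) oV] xM xV by auto
  define D where "D = frechet_derivative n (at x within M)"
  have nD: "(n has_derivative D) (at x within M)" unfolding D_def
    using nfacts(2) frechet_derivative_works by blast
  have blD: "bounded_linear D" using nD has_derivative_bounded_linear by blast
  obtain KD where KD: "KD > 0" "\<And>v. norm (D v) \<le> norm v * KD"
    using bounded_linear.pos_bounded[OF blD] by blast
  have nx1: "norm (n x) = 1" using assms(8) xM xV by auto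
  define S where "S = {v. \<nu> \<bullet> v = 0 \<and> norm v = 1}"
  define F where "F v = norm (D v)" for v
  define P where "P d = d - (\<nu> \<bullet> d) *\<^sub>R \<nu>" for d
  define \<pi> where "\<pi> y = P (y - x) /\<^sub>R norm (P (y - x))" for y
  define Aa where "Aa \<epsilon> = {y \<in> M \<inter> V. dist x y = \<epsilon>}" for \<epsilon>
  define LHS where "LHS \<epsilon> = (LINT y:Aa \<epsilon>|Hm. Omega n x y) / measure Hm (Aa \<epsilon>)" for \<epsilon>
  define \<psi> where "\<psi> = (LINT v:S|Hm. F v) / measure Hm S"
  have psi_eq: "psi m (tangent_space M x) (shape_operator M n x) = \<psi>"
  proof -
    have "{v \<in> tangent_space M x. norm v = 1} = S" unfolding TS S_def by auto
    then show ?thesis unfolding psi_def shape_operator_def \<psi>_def Let_def Hm_def s_def F_def D_def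
      by simp
  qed
  have lhs_eq: "(\<lambda>\<epsilon>. let A = {y \<in> M \<inter> V. dist x y = \<epsilon>}; H = hausdorff_measure (real m - 1) in
              (LINT y:A|H. Omega n x y) / measure H A) = LHS"
    unfolding LHS_def Aa_def Hm_def s_def Let_def by simp
  have "(LHS \<longlongrightarrow> \<psi>) (at_right 0)"
  proof -
    define P0 where "P0 = measure_space UNIV (sigma_sets UNIV (sets borel)) (hausdorff_outer s :: 'a set \<Rightarrow> ennreal)"
    have sig: "sigma_sets UNIV (sets borel) = (sets borel :: 'a set set)"
      using sets.sigma_sets_eq[of "borel :: 'a measure"] by simp
    have emHm: "emeasure Hm B = (if B \<in> sets borel \<and> P0 then hausdorff_outer s B else 0)" for B
      unfolding Hm_def hausdorff_measure_def P0_def emeasure_measure_of_conv sig by simp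
    show ?thesis
    proof (cases P0)
      case False
      then have m0: "measure Hm B = 0" for B unfolding measure_def emHm by simp
      have "LHS = (\<lambda>_. 0)" unfolding LHS_def m0 by simp
      moreover have "\<psi> = 0" unfolding \<psi>_def m0 by simp
      ultimately show ?thesis by simp
    next
      case True
      have setsH: "sets Hm = sets borel" unfolding Hm_def hausdorff_measure_def
        by (subst sets_measure_of) (auto simp: sig)
      have emH: "emeasure Hm B = hausdorff_outer s B" if "B \<in> sets borel" for B
        using True that by (simp add: emHm)
      define E where "E \<eta> = \<eta> * (1 + 2*KD) + (((1+\<eta>)^2/(1-\<eta>)) powr s - 1) * KD" for \<eta> :: real
      have Elim: "(E \<longlongrightarrow> 0) (at_right 0)"
      proof -
        have "((\<lambda>\<eta>::real. (1+\<eta>)^2/(1-\<eta>)) \<longlongrightarrow> (1+0)^2/(1-0)) (at_right 0)"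
          by (intro tendsto_intros) auto
        then have q: "((\<lambda>\<eta>::real. (1+\<eta>)^2/(1-\<eta>)) \<longlongrightarrow> 1) (at_right 0)" by simp
        have "((\<lambda>\<eta>. ((1+\<eta>)^2/(1-\<eta>)) powr s) \<longlongrightarrow> 1 powr s) (at_right 0)"
          by (rule tendsto_powr[OF q tendsto_const]) simp
        then have pw: "((\<lambda>\<eta>. ((1+\<eta>)^2/(1-\<eta>)) powr s) \<longlongrightarrow> 1) (at_right 0)" by simp
        have "(E \<longlongrightarrow> 0 * (1 + 2*KD) + (1 - 1) * KD) (at_right 0)"
          unfolding E_def by (intro tendsto_intros pw)
        then show ?thesis by simp
      qed
      show ?thesis
      proof (rule tendstoI)
        fix e :: real assume e: "e > 0"
        have ev: "eventually (\<lambda>\<eta>. E \<eta> < e \<and> \<eta> < 1/2 \<and> 0 < \<eta>) (at_right (0::real))"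
        proof (intro eventually_conj)
          show "eventually (\<lambda>\<eta>. E \<eta> < e) (at_right 0)" using order_tendstoD(2)[OF Elim e] .
          show "eventually (\<lambda>\<eta>::real. \<eta> < 1/2) (at_right 0)"
            unfolding eventually_at_right_field by (intro exI[of _ "1/2"]) auto
          show "eventually (\<lambda>\<eta>::real. 0 < \<eta>) (at_right 0)"
            unfolding eventually_at_right_field by (intro exI[of _ "1"]) auto
        qed
        then obtain b where b: "b > 0" "\<forall>y>0. y < b \<longrightarrow> E y < e \<and> y < 1/2 \<and> 0 < y"
          unfolding eventually_at_right_field by auto
        define \<eta> where "\<eta> = b/2"
        have eta: "0 < \<eta>" "\<eta> < 1/2" "E \<eta> < e" using b(2)[rule_format, of "b/2"] b(1) unfolding \<eta>_def by auto
        obtain \<rho> where rho: "\<rho> > 0" "ball x \<rho> \<subseteq> U \<inter> V"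
          "\<forall>y1\<in>M \<inter> ball x \<rho>. \<forall>y2\<in>M \<inter> ball x \<rho>. \<bar>\<nu> \<bullet> (y1-y2)\<bar> \<le> \<eta> * norm ((y1-y2) - (\<nu> \<bullet> (y1-y2)) *\<^sub>R \<nu>)"
          "\<forall>w. \<nu> \<bullet> w = 0 \<longrightarrow> norm w \<le> \<rho>/3 \<longrightarrow> (\<exists>t. \<bar>t\<bar> \<le> \<rho>/3 \<and> x + w + t *\<^sub>R \<nu> \<in> M)"
          using LG[OF eta(1)] by blast
        obtain \<rho>2 where rho2: "\<rho>2 > 0" "\<forall>y\<in>M. norm (y - x) < \<rho>2 \<longrightarrow> norm (n y - n x - D (y - x)) \<le> \<eta> * norm (y - x)"
          using nD eta(1) unfolding has_derivative_within_alt by blast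
        define \<epsilon>0 where "\<epsilon>0 = min (\<rho>/3) \<rho>2"
        have "eventually (\<lambda>\<epsilon>. dist (LHS \<epsilon>) \<psi> < e) (at_right 0)"
          unfolding eventually_at_right_field
        proof (intro exI[of _ \<epsilon>0] conjI allI impI)
          show "\<epsilon>0 > 0" unfolding \<epsilon>0_def using rho rho2 by simp
          fix \<epsilon> :: real assume \<epsilon>: "0 < \<epsilon>" "\<epsilon> < \<epsilon>0"
          show "dist (LHS \<epsilon>) \<psi> < e"
          proof -
          define A where "A = Aa \<epsilon>"
          have er: "\<epsilon> < \<rho>" "\<epsilon> \<le> \<rho>/3" "\<epsilon> < \<rho>2" using \<epsilon> rho(1) unfolding \<epsilon>0_def by auto
          have xin: "x \<in> M \<inter> ball x \<rho>" using xM rho(1) by simp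
          have nn: "\<nu> \<bullet> \<nu> = 1" using nu1 by (simp add: dot_square_norm)
          have Ab: "y \<in> M \<inter> ball x \<rho>" "norm (y - x) = \<epsilon>" "y \<in> M \<inter> V" if "y \<in> A" for y
            using that er unfolding A_def Aa_def by (auto simp: dist_norm norm_minus_commute)
          have tb: "\<bar>\<nu> \<bullet> (y - x)\<bar> \<le> \<eta> * norm (P (y - x))" if "y \<in> A" for y
            using rho(3) Ab(1)[OF that] xin unfolding P_def by blast
          have sp: "\<epsilon>/(1+\<eta>) \<le> norm (P (y-x))" "norm (P (y-x)) \<le> \<epsilon>" "P (y-x) \<noteq> 0"
            "norm ((y-x) /\<^sub>R \<epsilon> - P (y-x) /\<^sub>R norm (P (y-x))) \<le> 2*\<eta>" if y: "y \<in> A" for y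
            using single_point[OF nu1 \<epsilon>(1) less_imp_le[OF eta(1)] Ab(2)[OF y] tb[OF y, unfolded P_def]]
            unfolding P_def by auto
          have fcU: "continuous_on U f"
            using fd by (meson continuous_at_imp_continuous_on has_derivative_continuous)
          have closedA: "closed A"
          proof -
            have "A = sphere x \<epsilon> \<inter> f -` {0}"
            proof (rule set_eqI, rule iffI)
              fix y assume y: "y \<in> A"
              then have "y \<in> sphere x \<epsilon>" unfolding A_def Aa_def by simp
              moreover have "y \<in> U" using Ab(1)[OF y] rho(2) by auto
              then have "f y = 0" using Ab(3)[OF y] Uf(4) by auto
              ultimately show "y \<in> sphere x \<epsilon> \<inter> f -` {0}" by simp
            next
              fix y assume "y \<in> sphere x \<epsilon> \<inter> f -` {0}"
              then have y: "y \<in> sphere x \<epsilon>" "f y = 0" by auto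
              then have "y \<in> ball x \<rho>" using er by simp
              then have "y \<in> U" "y \<in> V" using rho(2) by auto
              then show "y \<in> A" using y Uf(4) unfolding A_def Aa_def by auto
            qed
            moreover have "continuous_on (sphere x \<epsilon>) f"
            proof (rule continuous_on_subset[OF fcU])
              show "sphere x \<epsilon> \<subseteq> U" using rho(2) er by auto
            qed
            ultimately show ?thesis using continuous_closed_preimage[of "sphere x \<epsilon>" f "{0}"] by simp
          qed
          have closedS: "closed S" unfolding S_def
            by (intro closed_Collect_conj closed_Collect_eq continuous_intros)
          have piS: "\<pi> y \<in> S" if y: "y \<in> A" for y
          proof -
            have "P (y - x) \<noteq> 0" using sp(3)[OF y] .
            moreover have "\<nu> \<bullet> P (y - x) = 0" using proj_basic(1)[OF nu1] unfolding P_def .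
            ultimately show ?thesis unfolding S_def \<pi>_def by simp
          qed
          have piA: "\<pi> ` A = S"
          proof
            show "\<pi> ` A \<subseteq> S" using piS by auto
            show "S \<subseteq> \<pi> ` A"
            proof
              fix v assume v: "v \<in> S"
              have nv: "\<nu> \<bullet> v = 0" "norm v = 1" using v unfolding S_def by auto
              define T where "T r = (SOME t. \<bar>t\<bar> \<le> \<rho>/3 \<and> x + r *\<^sub>R v + t *\<^sub>R \<nu> \<in> M)" for r
              have Tspec: "\<bar>T r\<bar> \<le> \<rho>/3 \<and> x + r *\<^sub>R v + T r *\<^sub>R \<nu> \<in> M" if r: "r \<in> {0..\<epsilon>}" for r
              proof -
                have "\<nu> \<bullet> (r *\<^sub>R v) = 0" "norm (r *\<^sub>R v) \<le> \<rho>/3" using nv r er by auto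
                then have "\<exists>t. \<bar>t\<bar> \<le> \<rho>/3 \<and> x + r *\<^sub>R v + t *\<^sub>R \<nu> \<in> M" using rho(4) by blast
                then show ?thesis unfolding T_def by (rule someI_ex)
              qed
              define Y where "Y r = x + r *\<^sub>R v + T r *\<^sub>R \<nu>" for r
              have Yx: "\<nu> \<bullet> (Y r - x) = T r" "P (Y r - x) = r *\<^sub>R v" for r
                unfolding Y_def P_def using nv nn by (auto simp: inner_add_right algebra_simps)
              have Yd: "\<nu> \<bullet> (Y r - Y r') = T r - T r'" "P (Y r - Y r') = (r - r') *\<^sub>R v" for r r'
                unfolding Y_def P_def using nv nn by (auto simp: inner_add_right inner_diff_right algebra_simps)
              have Yn: "norm (Y r - x) \<le> r + \<bar>T r\<bar>" if "r \<ge> 0" for r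
                unfolding Y_def using norm_triangle_ineq[of "r *\<^sub>R v" "T r *\<^sub>R \<nu>"] nv nu1 that by simp
              have Yb: "Y r \<in> M \<inter> ball x \<rho>" if r: "r \<in> {0..\<epsilon>}" for r
              proof -
                have "norm (Y r - x) < \<rho>" using Yn[of r] Tspec[OF r] r er by auto
                then have "dist x (Y r) < \<rho>" by (simp add: dist_norm norm_minus_commute[of x])
                moreover have "Y r \<in> M" using Tspec[OF r] unfolding Y_def by simp
                ultimately show ?thesis by simp
              qed
              have TL: "\<bar>T r - T r'\<bar> \<le> \<eta> * \<bar>r - r'\<bar>" if "r \<in> {0..\<epsilon>}" "r' \<in> {0..\<epsilon>}" for r r'
              proof -
                have "\<bar>\<nu> \<bullet> (Y r - Y r')\<bar> \<le> \<eta> * norm (P (Y r - Y r'))"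
                  using rho(3) Yb[OF that(1)] Yb[OF that(2)] unfolding P_def by blast
                then show ?thesis using Yd nv by simp
              qed
              have T0: "T 0 = 0"
              proof -
                have "\<bar>\<nu> \<bullet> (Y 0 - x)\<bar> \<le> \<eta> * norm (P (Y 0 - x))"
                  using rho(3) Yb[of 0] xin er \<epsilon> unfolding P_def by auto
                then show ?thesis using Yx by simp
              qed
              have Tc: "continuous_on {0..\<epsilon>} T"
                unfolding continuous_on_iff
              proof (intro ballI allI impI)
                fix r and c :: real assume r: "r \<in> {0..\<epsilon>}" and c: "c > 0"
                show "\<exists>d>0. \<forall>r'\<in>{0..\<epsilon>}. dist r' r < d \<longrightarrow> dist (T r') (T r) < c"
                proof (intro exI[of _ "c / (1 + \<eta>)"] conjI ballI impI)
                  show "c / (1 + \<eta>) > 0" using c eta by simp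
                  fix r' assume r': "r' \<in> {0..\<epsilon>}" and d: "dist r' r < c / (1 + \<eta>)"
                  have "\<bar>T r' - T r\<bar> \<le> \<eta> * \<bar>r' - r\<bar>" using TL[OF r' r] .
                  also have "\<dots> \<le> \<eta> * (c / (1 + \<eta>))" using d eta by (intro mult_left_mono) (auto simp: dist_real_def)
                  also have "\<dots> < c" using c eta by (simp add: field_simps)
                  finally show "dist (T r') (T r) < c" by (simp add: dist_real_def)
                qed
              qed
              define \<phi> where "\<phi> r = norm (r *\<^sub>R v + T r *\<^sub>R \<nu>)" for r
              have phiY: "\<phi> r = norm (Y r - x)" for r unfolding \<phi>_def Y_def by simp
              have phic: "continuous_on {0..\<epsilon>} \<phi>" unfolding \<phi>_def
                by (intro continuous_intros Tc)
              have phi0: "\<phi> 0 = 0" unfolding \<phi>_def T0 by simp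
              have phie: "\<epsilon> \<le> \<phi> \<epsilon>"
              proof -
                have "norm (P (Y \<epsilon> - x)) \<le> norm (Y \<epsilon> - x)" using proj_basic(3)[OF nu1] unfolding P_def .
                then show ?thesis using Yx(2)[of \<epsilon>] nv \<epsilon> phiY by simp
              qed
              obtain r where r: "0 \<le> r" "r \<le> \<epsilon>" "\<phi> r = \<epsilon>"
                using IVT'[of \<phi> 0 \<epsilon> \<epsilon>, OF _ phie _ phic] phi0 \<epsilon> by auto
              have rpos: "r > 0" using r phi0 \<epsilon> by (cases "r = 0") auto
              have rr: "r \<in> {0..\<epsilon>}" using r by simp
              have "Y r \<in> A"
              proof -
                have "Y r \<in> M" "Y r \<in> ball x \<rho>" using Yb[OF rr] by auto
                then have "Y r \<in> V" using rho(2) by auto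
                moreover have "dist x (Y r) = \<epsilon>" using r(3) phiY by (simp add: dist_norm norm_minus_commute)
                ultimately show ?thesis using \<open>Y r \<in> M\<close> unfolding A_def Aa_def by simp
              qed
              moreover have "\<pi> (Y r) = v" unfolding \<pi>_def Yx(2) using rpos nv by simp
              ultimately show "v \<in> \<pi> ` A" by force
            qed
          qed
          have lip: "(1-\<eta>)/\<epsilon> * dist a b \<le> dist (\<pi> a) (\<pi> b) \<and> dist (\<pi> a) (\<pi> b) \<le> (1+\<eta>)^2/\<epsilon> * dist a b"
            if ab: "a \<in> A" "b \<in> A" for a b
          proof -
            have t12: "\<bar>\<nu> \<bullet> ((a - x) - (b - x))\<bar> \<le> \<eta> * norm (((a - x) - (b - x)) - (\<nu> \<bullet> ((a - x) - (b - x))) *\<^sub>R \<nu>)"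
              using rho(3) Ab(1)[OF ab(1)] Ab(1)[OF ab(2)] by simp
            note pp = pair_points[OF nu1 \<epsilon>(1) less_imp_le[OF eta(1)] _ Ab(2)[OF ab(1)] Ab(2)[OF ab(2)]
                tb[OF ab(1), unfolded P_def] tb[OF ab(2), unfolded P_def] t12]
            have "\<eta> \<le> 1" using eta by simp
            then show ?thesis using pp unfolding \<pi>_def P_def by (simp add: dist_norm)
          qed
          have pc: "continuous_on A \<pi>"
          proof -
            have "\<forall>y\<in>A. norm (P (y - x)) \<noteq> 0" using sp(3) by simp
            then show ?thesis unfolding \<pi>_def P_def by (intro continuous_intros) auto
          qed
          have Fc: "continuous_on UNIV F" unfolding F_def
            by (intro continuous_on_norm linear_continuous_on blD)
          have F0: "0 \<le> F v \<and> F v \<le> KD" if "v \<in> S" for v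
            using KD(2)[of v] that unfolding F_def S_def by simp
          have om: "Omega n x y = norm (n x - n y) / \<epsilon>" if y: "y \<in> A" for y
          proof -
            have "norm (n y) = 1" using assms(8) Ab(3)[OF y] by auto
            then have "2 * sin (arccos (n x \<bullet> n y) / 2) = norm (n x - n y)" using omega_identity nx1 by blast
            moreover have "norm (x - y) = \<epsilon>" using Ab(2)[OF y] by (simp add: norm_minus_commute)
            ultimately show ?thesis unfolding Omega_def by simp
          qed
          have Gb: "0 \<le> Omega n x y \<and> \<bar>Omega n x y - F (\<pi> y)\<bar> \<le> \<eta> * (1 + 2*KD)" if y: "y \<in> A" for y
          proof -
            have lD: "linear D" using blD bounded_linear.linear by blast
            have eq: "(n y - n x) /\<^sub>R \<epsilon> - D (\<pi> y) = (n y - n x - D (y - x)) /\<^sub>R \<epsilon> + D ((y - x) /\<^sub>R \<epsilon> - \<pi> y)"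
            proof -
              have "D ((y - x) /\<^sub>R \<epsilon> - \<pi> y) = D (y - x) /\<^sub>R \<epsilon> - D (\<pi> y)"
                using lD by (simp add: linear_diff linear_scale)
              then show ?thesis by (simp add: algebra_simps)
            qed
            have b1: "norm (n y - n x - D (y - x)) \<le> \<eta> * \<epsilon>"
              using rho2(2) Ab(3)[OF y] Ab(2)[OF y] er by auto
            have b2: "norm (D ((y - x) /\<^sub>R \<epsilon> - \<pi> y)) \<le> 2 * \<eta> * KD"
            proof -
              have "norm (D ((y - x) /\<^sub>R \<epsilon> - \<pi> y)) \<le> norm ((y - x) /\<^sub>R \<epsilon> - \<pi> y) * KD" by (rule KD(2))
              also have "\<dots> \<le> (2 * \<eta>) * KD" using sp(4)[OF y] KD(1) unfolding \<pi>_def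
                by (intro mult_right_mono) auto
              finally show ?thesis by simp
            qed
            have "\<bar>Omega n x y - F (\<pi> y)\<bar> = \<bar>norm ((n y - n x) /\<^sub>R \<epsilon>) - norm (D (\<pi> y))\<bar>"
              unfolding om[OF y] F_def using \<epsilon> by (simp add: norm_minus_commute divide_inverse mult.commute)
            also have "\<dots> \<le> norm ((n y - n x) /\<^sub>R \<epsilon> - D (\<pi> y))" by (rule norm_triangle_ineq3)
            also have "\<dots> \<le> norm ((n y - n x - D (y - x)) /\<^sub>R \<epsilon>) + norm (D ((y - x) /\<^sub>R \<epsilon> - \<pi> y))"
              unfolding eq by (rule norm_triangle_ineq)
            also have "\<dots> \<le> \<eta> + 2 * \<eta> * KD"
            proof -
              have "norm ((n y - n x - D (y - x)) /\<^sub>R \<epsilon>) = inverse \<epsilon> * norm (n y - n x - D (y - x))"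
                using \<epsilon> by simp
              also have "\<dots> \<le> inverse \<epsilon> * (\<eta> * \<epsilon>)" using b1 \<epsilon> by (intro mult_left_mono) auto
              also have "\<dots> = \<eta>" using \<epsilon> by simp
              finally have "norm ((n y - n x - D (y - x)) /\<^sub>R \<epsilon>) \<le> \<eta>" .
              then show ?thesis using b2 by linarith
            qed
            finally have "\<bar>Omega n x y - F (\<pi> y)\<bar> \<le> \<eta> * (1 + 2*KD)" by (simp add: algebra_simps)
            moreover have "0 \<le> Omega n x y" unfolding om[OF y] using \<epsilon> by simp
            ultimately show ?thesis by simp
          qed
          have Gm: "(\<lambda>y. indicator A y * Omega n x y) \<in> borel_measurable borel"
          proof -
            define h where "h y = norm (n x - n y) / \<epsilon>" for y
            have "continuous_on A n" using continuous_on_subset[OF nfacts(1)] Ab(3) by blast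
            then have hc: "continuous_on A h" unfolding h_def by (intro continuous_intros) (use \<epsilon> in auto)
            have "(\<lambda>y. indicator A y *\<^sub>R h y) \<in> borel_measurable borel"
              using borel_measurable_continuous_on_indicator[OF _ hc] closedA by auto
            moreover have "(\<lambda>y. indicator A y *\<^sub>R h y) = (\<lambda>y. indicator A y * Omega n x y)"
            proof
              fix y show "indicator A y *\<^sub>R h y = indicator A y * Omega n x y"
                by (cases "y \<in> A") (auto simp: om h_def)
            qed
            ultimately show ?thesis by simp
          qed
          have al: "0 < (1-\<eta>)/\<epsilon>" "(1-\<eta>)/\<epsilon> \<le> (1+\<eta>)^2/\<epsilon>"
          proof -
            show "0 < (1-\<eta>)/\<epsilon>" using eta \<epsilon> by simp
            have "1 - \<eta> \<le> (1+\<eta>)^2" using eta by (simp add: power2_eq_square algebra_simps)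
            then show "(1-\<eta>)/\<epsilon> \<le> (1+\<eta>)^2/\<epsilon>" using \<epsilon> by (simp add: divide_right_mono)
          qed
          have s0: "s > 0" using s1 by simp
          have main: "\<bar>(LINT y:A|Hm. Omega n x y)/measure Hm A - (LINT v:S|Hm. F v)/measure Hm S\<bar>
              \<le> \<eta> * (1 + 2*KD) + ((((1+\<eta>)^2/\<epsilon>) / ((1-\<eta>)/\<epsilon>)) powr s - 1) * KD"
            by (rule abstract_ratio[OF setsH emH s0 closedA closedS piA al lip pc Fc F0 less_imp_le[OF KD(1)] _ Gm Gb])
               (use eta KD in auto)
          have q: "((1+\<eta>)^2/\<epsilon>) / ((1-\<eta>)/\<epsilon>) = (1+\<eta>)^2/(1-\<eta>)" using \<epsilon> eta by (simp add: field_simps)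
          have "\<bar>LHS \<epsilon> - \<psi>\<bar> \<le> E \<eta>" using main unfolding q LHS_def \<psi>_def E_def A_def .
          then show ?thesis using eta(3) by (simp add: dist_real_def)
          qed
        qed
        then show "eventually (\<lambda>\<epsilon>. dist (LHS \<epsilon>) \<psi> < e) (at_right 0)" .
      qed
    qed
  qed
  then show ?thesis unfolding lhs_eq psi_eq .
qed


end
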